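(* Let $(L,F,R)$ be an adjoint triple of covariant functors $F:\mathcal{A}\to \mathcal{B}$ and $L,R:\mathcal{B}\to \mathcal{A}$ between abelian categories (that is, $L$ is left adjoint to $F$ and $R$ is right adjoint to $F$). (1) Let $M,N$ be objects of $\mathcal{A}$ and assume $F$ is fully faithful. Then $N$ is strongly $M$-Rickart in $\mathcal{A}$ if and only if $F(N)$ is strongly $F(M)$-Rickart in $\mathcal{B}$; and $N$ is dual strongly $M$-Rickart in $\mathcal{A}$ if and only if $F(N)$ is dual strongly $F(M)$-Rickart in $\mathcal{B}$. (2) Let $M,N$ be objects of $\mathcal{B}$ and assume $L$ (or $R$) is fully faithful. Then (i) $N$ is strongly $M$-Rickart in $\mathcal{B}$ if and only if $R(N)$ is strongly $R(M)$-Rickart in $\mathcal{A}$; (ii) $N$ is dual strongly $M$-Rickart in $\mathcal{B}$ if and only if $L(N)$ is dual strongly $L(M)$-Rickart in $\mathcal{A}$.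
   Context: A morphism $f:X\to Y$ is a section if $f'f=1_X$ for some $f'$, a retraction if $ff'=1_Y$ for some $f'$. A monomorphism $k:K\to X$ is fully invariant if for every $h:X\to X$ there is $\alpha:K\to K$ with $hk=k\alpha$; an epimorphism $c:X\to C$ is fully coinvariant if for every $h:X\to X$ there is $\gamma:C\to C$ with $ch=\gamma c$. For objects $M,N$: $N$ is strongly $M$-Rickart if the kernel of every morphism $f:M\to N$ is a fully invariant section; $N$ is dual strongly $M$-Rickart if the cokernel of every morphism $f:M\to N$ is a fully coinvariant retraction. *)

theory Defs
  imports Main
begin

text \<open>Categories given explicitly: objects, arrows, domain, codomain,
  composition (Cmp C g f = g after f, defined when Cod f = Dom g) and identities.\<close>

record ('o, 'm) cat =
  Obj :: "'o set"
  Arr :: "'m set"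
  Dom :: "'m \<Rightarrow> 'o"
  Cod :: "'m \<Rightarrow> 'o"
  Cmp :: "'m \<Rightarrow> 'm \<Rightarrow> 'm"
  Idm :: "'o \<Rightarrow> 'm"

definition hom :: "('o, 'm) cat \<Rightarrow> 'o \<Rightarrow> 'o \<Rightarrow> 'm set" where
  "hom C X Y = {f \<in> Arr C. Dom C f = X \<and> Cod C f = Y}"

definition category :: "('o, 'm) cat \<Rightarrow> bool" where
  "category C \<longleftrightarrow>
     (\<forall>f\<in>Arr C. Dom C f \<in> Obj C \<and> Cod C f \<in> Obj C) \<and>
     (\<forall>X\<in>Obj C. Idm C X \<in> hom C X X) \<and>
     (\<forall>f\<in>Arr C. \<forall>g\<in>Arr C. Cod C f = Dom C g \<longrightarrow>
        Cmp C g f \<in> hom C (Dom C f) (Cod C g)) \<and>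
     (\<forall>f\<in>Arr C. Cmp C f (Idm C (Dom C f)) = f \<and> Cmp C (Idm C (Cod C f)) f = f) \<and>
     (\<forall>f\<in>Arr C. \<forall>g\<in>Arr C. \<forall>h\<in>Arr C. Cod C f = Dom C g \<and> Cod C g = Dom C h \<longrightarrow>
        Cmp C h (Cmp C g f) = Cmp C (Cmp C h g) f)"

definition mono :: "('o, 'm) cat \<Rightarrow> 'm \<Rightarrow> bool" where
  "mono C m \<longleftrightarrow> m \<in> Arr C \<and>
     (\<forall>g\<in>Arr C. \<forall>h\<in>Arr C. Cod C g = Dom C m \<and> Cod C h = Dom C m \<and> Dom C g = Dom C h
        \<and> Cmp C m g = Cmp C m h \<longrightarrow> g = h)"

definition epi :: "('o, 'm) cat \<Rightarrow> 'm \<Rightarrow> bool" where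
  "epi C e \<longleftrightarrow> e \<in> Arr C \<and>
     (\<forall>g\<in>Arr C. \<forall>h\<in>Arr C. Dom C g = Cod C e \<and> Dom C h = Cod C e \<and> Cod C g = Cod C h
        \<and> Cmp C g e = Cmp C h e \<longrightarrow> g = h)"

definition zero_object :: "('o, 'm) cat \<Rightarrow> 'o \<Rightarrow> bool" where
  "zero_object C Z \<longleftrightarrow> Z \<in> Obj C \<and>
     (\<forall>X\<in>Obj C. (\<exists>!f. f \<in> hom C X Z) \<and> (\<exists>!f. f \<in> hom C Z X))"

definition zero_arrow :: "('o, 'm) cat \<Rightarrow> 'm \<Rightarrow> bool" where
  "zero_arrow C z \<longleftrightarrow> z \<in> Arr C \<and>
     (\<exists>Z a b. zero_object C Z \<and> a \<in> hom C (Dom C z) Z \<and> b \<in> hom C Z (Cod C z)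
        \<and> z = Cmp C b a)"

definition is_kernel :: "('o, 'm) cat \<Rightarrow> 'm \<Rightarrow> 'm \<Rightarrow> bool" where
  "is_kernel C f k \<longleftrightarrow> f \<in> Arr C \<and> k \<in> Arr C \<and> Cod C k = Dom C f \<and>
     zero_arrow C (Cmp C f k) \<and>
     (\<forall>g\<in>Arr C. Cod C g = Dom C f \<and> zero_arrow C (Cmp C f g) \<longrightarrow>
        (\<exists>!u. u \<in> hom C (Dom C g) (Dom C k) \<and> Cmp C k u = g))"

definition is_cokernel :: "('o, 'm) cat \<Rightarrow> 'm \<Rightarrow> 'm \<Rightarrow> bool" where
  "is_cokernel C f c \<longleftrightarrow> f \<in> Arr C \<and> c \<in> Arr C \<and> Dom C c = Cod C f \<and>
     zero_arrow C (Cmp C c f) \<and>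
     (\<forall>g\<in>Arr C. Dom C g = Cod C f \<and> zero_arrow C (Cmp C g f) \<longrightarrow>
        (\<exists>!u. u \<in> hom C (Cod C c) (Cod C g) \<and> Cmp C u c = g))"

definition is_product :: "('o, 'm) cat \<Rightarrow> 'o \<Rightarrow> 'o \<Rightarrow> 'o \<Rightarrow> 'm \<Rightarrow> 'm \<Rightarrow> bool" where
  "is_product C X Y P p1 p2 \<longleftrightarrow> P \<in> Obj C \<and> p1 \<in> hom C P X \<and> p2 \<in> hom C P Y \<and>
     (\<forall>Q q1 q2. q1 \<in> hom C Q X \<and> q2 \<in> hom C Q Y \<longrightarrow>
        (\<exists>!u. u \<in> hom C Q P \<and> Cmp C p1 u = q1 \<and> Cmp C p2 u = q2))"

definition is_coproduct :: "('o, 'm) cat \<Rightarrow> 'o \<Rightarrow> 'o \<Rightarrow> 'o \<Rightarrow> 'm \<Rightarrow> 'm \<Rightarrow> bool" where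
  "is_coproduct C X Y S i1 i2 \<longleftrightarrow> S \<in> Obj C \<and> i1 \<in> hom C X S \<and> i2 \<in> hom C Y S \<and>
     (\<forall>Q q1 q2. q1 \<in> hom C X Q \<and> q2 \<in> hom C Y Q \<longrightarrow>
        (\<exists>!u. u \<in> hom C S Q \<and> Cmp C u i1 = q1 \<and> Cmp C u i2 = q2))"

text \<open>Abelian category (Freyd's characterization): zero object, binary products and
  coproducts, kernels and cokernels, every mono is a kernel, every epi is a cokernel.\<close>
definition abelian :: "('o, 'm) cat \<Rightarrow> bool" where
  "abelian C \<longleftrightarrow> category C \<and> (\<exists>Z. zero_object C Z) \<and>
     (\<forall>X\<in>Obj C. \<forall>Y\<in>Obj C. \<exists>P p1 p2. is_product C X Y P p1 p2) \<and>
     (\<forall>X\<in>Obj C. \<forall>Y\<in>Obj C. \<exists>S i1 i2. is_coproduct C X Y S i1 i2) \<and>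
     (\<forall>f\<in>Arr C. \<exists>k. is_kernel C f k) \<and>
     (\<forall>f\<in>Arr C. \<exists>c. is_cokernel C f c) \<and>
     (\<forall>m. mono C m \<longrightarrow> (\<exists>f. is_kernel C f m)) \<and>
     (\<forall>e. epi C e \<longrightarrow> (\<exists>f. is_cokernel C f e))"

definition is_functor :: "('a, 'b) cat \<Rightarrow> ('c, 'd) cat \<Rightarrow> ('a \<Rightarrow> 'c) \<Rightarrow> ('b \<Rightarrow> 'd) \<Rightarrow> bool" where
  "is_functor A B F0 F1 \<longleftrightarrow>
     (\<forall>X\<in>Obj A. F0 X \<in> Obj B) \<and>
     (\<forall>f\<in>Arr A. F1 f \<in> hom B (F0 (Dom A f)) (F0 (Cod A f))) \<and>
     (\<forall>X\<in>Obj A. F1 (Idm A X) = Idm B (F0 X)) \<and>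
     (\<forall>f\<in>Arr A. \<forall>g\<in>Arr A. Cod A f = Dom A g \<longrightarrow> F1 (Cmp A g f) = Cmp B (F1 g) (F1 f))"

definition fully_faithful :: "('a, 'b) cat \<Rightarrow> ('c, 'd) cat \<Rightarrow> ('a \<Rightarrow> 'c) \<Rightarrow> ('b \<Rightarrow> 'd) \<Rightarrow> bool" where
  "fully_faithful A B F0 F1 \<longleftrightarrow>
     (\<forall>X\<in>Obj A. \<forall>Y\<in>Obj A. bij_betw F1 (hom A X Y) (hom B (F0 X) (F0 Y)))"

text \<open>adjunction C D L0 L1 G0 G1: the functor L : C \<rightarrow> D is left adjoint to G : D \<rightarrow> C,
  given by a natural unit eta with the universal property (Mac Lane IV.1, Thm 2).\<close>
definition adjunction ::
  "('a, 'b) cat \<Rightarrow> ('c, 'd) cat \<Rightarrow> ('a \<Rightarrow> 'c) \<Rightarrow> ('b \<Rightarrow> 'd) \<Rightarrow> ('c \<Rightarrow> 'a) \<Rightarrow> ('d \<Rightarrow> 'b) \<Rightarrow> bool" where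
  "adjunction C D L0 L1 G0 G1 \<longleftrightarrow> is_functor C D L0 L1 \<and> is_functor D C G0 G1 \<and>
     (\<exists>eta. (\<forall>X\<in>Obj C. eta X \<in> hom C X (G0 (L0 X))) \<and>
        (\<forall>h\<in>Arr C. Cmp C (G1 (L1 h)) (eta (Dom C h)) = Cmp C (eta (Cod C h)) h) \<and>
        (\<forall>X\<in>Obj C. \<forall>Y\<in>Obj D. \<forall>g\<in>hom C X (G0 Y).
           \<exists>!f. f \<in> hom D (L0 X) Y \<and> Cmp C (G1 f) (eta X) = g))"

definition is_section :: "('o, 'm) cat \<Rightarrow> 'm \<Rightarrow> bool" where
  "is_section C f \<longleftrightarrow> f \<in> Arr C \<and>
     (\<exists>f'. f' \<in> hom C (Cod C f) (Dom C f) \<and> Cmp C f' f = Idm C (Dom C f))"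

definition retraction :: "('o, 'm) cat \<Rightarrow> 'm \<Rightarrow> bool" where
  "retraction C f \<longleftrightarrow> f \<in> Arr C \<and>
     (\<exists>f'. f' \<in> hom C (Cod C f) (Dom C f) \<and> Cmp C f f' = Idm C (Cod C f))"

definition fully_invariant :: "('o, 'm) cat \<Rightarrow> 'm \<Rightarrow> bool" where
  "fully_invariant C k \<longleftrightarrow> mono C k \<and>
     (\<forall>h\<in>hom C (Cod C k) (Cod C k). \<exists>\<alpha>\<in>hom C (Dom C k) (Dom C k). Cmp C h k = Cmp C k \<alpha>)"

definition fully_coinvariant :: "('o, 'm) cat \<Rightarrow> 'm \<Rightarrow> bool" where
  "fully_coinvariant C c \<longleftrightarrow> epi C c \<and>
     (\<forall>h\<in>hom C (Dom C c) (Dom C c). \<exists>\<gamma>\<in>hom C (Cod C c) (Cod C c). Cmp C c h = Cmp C \<gamma> c)"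

definition strongly_rickart :: "('o, 'm) cat \<Rightarrow> 'o \<Rightarrow> 'o \<Rightarrow> bool" where
  "strongly_rickart C M N \<longleftrightarrow>
     (\<forall>f\<in>hom C M N. \<forall>k. is_kernel C f k \<longrightarrow> is_section C k \<and> fully_invariant C k)"

definition dual_strongly_rickart :: "('o, 'm) cat \<Rightarrow> 'o \<Rightarrow> 'o \<Rightarrow> bool" where
  "dual_strongly_rickart C M N \<longleftrightarrow>
     (\<forall>f\<in>hom C M N. \<forall>c. is_cokernel C f c \<longrightarrow> retraction C c \<and> fully_coinvariant C c)"

end

theory Submission
  imports Defs
begin


lemma cat_basic:
  assumes C: "category C"
  shows dom_obj: "f \<in> Arr C \<Longrightarrow> Dom C f \<in> Obj C"
    and cod_obj: "f \<in> Arr C \<Longrightarrow> Cod C f \<in> Obj C"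
    and id_arr: "X \<in> Obj C \<Longrightarrow> Idm C X \<in> Arr C"
    and id_dom: "X \<in> Obj C \<Longrightarrow> Dom C (Idm C X) = X"
    and id_cod: "X \<in> Obj C \<Longrightarrow> Cod C (Idm C X) = X"
    and cmp_arr: "f \<in> Arr C \<Longrightarrow> g \<in> Arr C \<Longrightarrow> Cod C f = Dom C g \<Longrightarrow> Cmp C g f \<in> Arr C"
    and cmp_dom: "f \<in> Arr C \<Longrightarrow> g \<in> Arr C \<Longrightarrow> Cod C f = Dom C g \<Longrightarrow> Dom C (Cmp C g f) = Dom C f"
    and cmp_cod: "f \<in> Arr C \<Longrightarrow> g \<in> Arr C \<Longrightarrow> Cod C f = Dom C g \<Longrightarrow> Cod C (Cmp C g f) = Cod C g"
    and id_r: "f \<in> Arr C \<Longrightarrow> Dom C f = X \<Longrightarrow> Cmp C f (Idm C X) = f"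
    and id_l: "f \<in> Arr C \<Longrightarrow> Cod C f = X \<Longrightarrow> Cmp C (Idm C X) f = f"
    and assoc: "f \<in> Arr C \<Longrightarrow> g \<in> Arr C \<Longrightarrow> h \<in> Arr C \<Longrightarrow> Cod C f = Dom C g \<Longrightarrow> Cod C g = Dom C h
       \<Longrightarrow> Cmp C h (Cmp C g f) = Cmp C (Cmp C h g) f"
  using C unfolding category_def hom_def by auto

lemmas cs = dom_obj cod_obj id_arr id_dom id_cod cmp_arr cmp_dom cmp_cod

lemma functor_basic:
  assumes F: "is_functor C D F0 F1"
  shows fobj: "X \<in> Obj C \<Longrightarrow> F0 X \<in> Obj D"
    and farr: "f \<in> Arr C \<Longrightarrow> F1 f \<in> Arr D"
    and fdom: "f \<in> Arr C \<Longrightarrow> Dom D (F1 f) = F0 (Dom C f)"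
    and fcod: "f \<in> Arr C \<Longrightarrow> Cod D (F1 f) = F0 (Cod C f)"
    and fid: "X \<in> Obj C \<Longrightarrow> F1 (Idm C X) = Idm D (F0 X)"
    and fcmp: "f \<in> Arr C \<Longrightarrow> g \<in> Arr C \<Longrightarrow> Cod C f = Dom C g \<Longrightarrow> F1 (Cmp C g f) = Cmp D (F1 g) (F1 f)"
  using F unfolding is_functor_def hom_def by auto

lemmas fs = fobj farr fdom fcod

definition op :: "('o, 'm) cat \<Rightarrow> ('o, 'm) cat" where
  "op C = \<lparr>Obj = Obj C, Arr = Arr C, Dom = Cod C, Cod = Dom C, Cmp = (\<lambda>g f. Cmp C f g), Idm = Idm C\<rparr>"

lemma op_simps[simp]: "Obj (op C) = Obj C" "Arr (op C) = Arr C" "Dom (op C) = Cod C" "Cod (op C) = Dom C"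
  "Cmp (op C) g f = Cmp C f g" "Idm (op C) = Idm C"
  by (simp_all add: op_def)

lemma op_hom[simp]: "hom (op C) X Y = hom C Y X"
  by (auto simp: hom_def)

lemma op_category: "category C \<Longrightarrow> category (op C)"
  unfolding category_def by (auto simp: hom_def)

lemma op_mono[simp]: "mono (op C) m = epi C m"
  unfolding mono_def epi_def by auto

lemma op_zero_object[simp]: "zero_object (op C) Z = zero_object C Z"
  unfolding zero_object_def by auto

lemma op_zero_arrow[simp]: "zero_arrow (op C) z = zero_arrow C z"
  unfolding zero_arrow_def by auto

lemma op_kernel[simp]: "is_kernel (op C) f k = is_cokernel C f k"
  unfolding is_kernel_def is_cokernel_def by auto

lemma op_section[simp]: "is_section (op C) f = retraction C f"
  unfolding is_section_def retraction_def by auto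

lemma op_fi[simp]: "fully_invariant (op C) k = fully_coinvariant C k"
  unfolding fully_invariant_def fully_coinvariant_def by auto

lemma op_sr: "strongly_rickart (op C) N M = dual_strongly_rickart C M N"
  unfolding strongly_rickart_def dual_strongly_rickart_def by auto

lemma op_functor: "is_functor C D F0 F1 \<Longrightarrow> is_functor (op C) (op D) F0 F1"
  unfolding is_functor_def by (auto simp: hom_def)

lemma op_ff: "fully_faithful C D F0 F1 \<Longrightarrow> fully_faithful (op C) (op D) F0 F1"
  unfolding fully_faithful_def by auto


lemma zero_obj:
  assumes Z: "zero_object C Z"
  shows zo_obj: "Z \<in> Obj C"
    and zo_to_ex: "X \<in> Obj C \<Longrightarrow> \<exists>f. f \<in> hom C X Z"
    and zo_from_ex: "X \<in> Obj C \<Longrightarrow> \<exists>f. f \<in> hom C Z X"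
    and zo_to_un: "X \<in> Obj C \<Longrightarrow> f \<in> hom C X Z \<Longrightarrow> g \<in> hom C X Z \<Longrightarrow> f = g"
    and zo_from_un: "X \<in> Obj C \<Longrightarrow> f \<in> hom C Z X \<Longrightarrow> g \<in> hom C Z X \<Longrightarrow> f = g"
proof -
  have *: "\<forall>X\<in>Obj C. (\<exists>!f. f \<in> hom C X Z) \<and> (\<exists>!f. f \<in> hom C Z X)" and "Z \<in> Obj C"
    using Z unfolding zero_object_def by auto
  then show "Z \<in> Obj C" by simp
  show "X \<in> Obj C \<Longrightarrow> \<exists>f. f \<in> hom C X Z" using * by blast
  show "X \<in> Obj C \<Longrightarrow> \<exists>f. f \<in> hom C Z X" using * by blast
  show "X \<in> Obj C \<Longrightarrow> f \<in> hom C X Z \<Longrightarrow> g \<in> hom C X Z \<Longrightarrow> f = g"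
  proof -
    assume "X \<in> Obj C" "f \<in> hom C X Z" "g \<in> hom C X Z"
    then have "\<exists>!f. f \<in> hom C X Z" "\<exists>!f. f \<in> hom C Z X" using * by auto
    then show "f = g" using \<open>f \<in> hom C X Z\<close> \<open>g \<in> hom C X Z\<close> by blast
  qed
  show "X \<in> Obj C \<Longrightarrow> f \<in> hom C Z X \<Longrightarrow> g \<in> hom C Z X \<Longrightarrow> f = g"
  proof -
    assume "X \<in> Obj C" "f \<in> hom C Z X" "g \<in> hom C Z X"
    then have "\<exists>!f. f \<in> hom C X Z" "\<exists>!f. f \<in> hom C Z X" using * by auto
    then show "f = g" using \<open>f \<in> hom C Z X\<close> \<open>g \<in> hom C Z X\<close> by blast
  qed
qed
lemma zero_cmp_right:
  assumes C: "category C" and z: "zero_arrow C z" and a: "a \<in> Arr C" "Cod C a = Dom C z"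
  shows "zero_arrow C (Cmp C z a)"
proof -
  from z obtain Z p q where Z: "zero_object C Z" and p: "p \<in> hom C (Dom C z) Z"
    and q: "q \<in> hom C Z (Cod C z)" and zq: "z = Cmp C q p" unfolding zero_arrow_def by blast
  have za: "z \<in> Arr C" using z unfolding zero_arrow_def by blast
  have e: "Cmp C z a = Cmp C q (Cmp C p a)" using zq assoc[OF C, of a p q] p q a by (simp add: hom_def)
  have "Cmp C p a \<in> hom C (Dom C (Cmp C z a)) Z" "q \<in> hom C Z (Cod C (Cmp C z a))"
    "Cmp C z a \<in> Arr C"
    using p q a za C by (auto simp: hom_def cs)
  then show ?thesis unfolding zero_arrow_def using Z e by blast
qed

lemma zero_cmp_left:
  assumes C: "category C" and z: "zero_arrow C z" and a: "a \<in> Arr C" "Dom C a = Cod C z"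
  shows "zero_arrow C (Cmp C a z)"
  using zero_cmp_right[of "op C" z a] op_category[OF C] z a by simp

lemma zero_arrow_unique:
  assumes C: "category C" and z1: "zero_arrow C z1" and z2: "zero_arrow C z2"
    and d: "Dom C z1 = Dom C z2" and c: "Cod C z1 = Cod C z2"
  shows "z1 = z2"
proof -
  from z1 obtain Z1 p1 q1 where Z1: "zero_object C Z1" and p1: "p1 \<in> hom C (Dom C z1) Z1"
    and q1: "q1 \<in> hom C Z1 (Cod C z1)" and e1: "z1 = Cmp C q1 p1" unfolding zero_arrow_def by blast
  from z2 obtain Z2 p2 q2 where Z2: "zero_object C Z2" and p2: "p2 \<in> hom C (Dom C z2) Z2"
    and q2: "q2 \<in> hom C Z2 (Cod C z2)" and e2: "z2 = Cmp C q2 p2" unfolding zero_arrow_def by blast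
  have O1: "Z1 \<in> Obj C" "Z2 \<in> Obj C" using Z1 Z2 by (auto simp: zo_obj)
  obtain i where i: "i \<in> hom C Z1 Z2" using zo_from_ex[OF Z1 O1(2)] by blast
  have "z1 \<in> Arr C" using z1 unfolding zero_arrow_def by blast
  then have X: "Dom C z1 \<in> Obj C" "Cod C z1 \<in> Obj C" using C by (auto simp: cs)
  have "Cmp C i p1 \<in> hom C (Dom C z1) Z2" using i p1 C by (auto simp: hom_def cs)
  then have ip: "Cmp C i p1 = p2" using zo_to_un[OF Z2] X p2 d by metis
  have "Cmp C q2 i \<in> hom C Z1 (Cod C z1)" using i q2 C c by (auto simp: hom_def cs)
  then have qi: "Cmp C q2 i = q1" using zo_from_un[OF Z1] X q1 by metis
  have "z2 = Cmp C q2 (Cmp C i p1)" using e2 ip by simp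
  also have "\<dots> = Cmp C (Cmp C q2 i) p1" using assoc[OF C, of p1 i q2] i p1 q2 by (simp add: hom_def)
  finally show ?thesis using qi e1 by simp
qed

lemma terminal_zero:
  assumes C: "category C" and Z: "zero_object C Z" and T: "T \<in> Obj C"
    and trm_ex: "\<And>X. X \<in> Obj C \<Longrightarrow> \<exists>f. f \<in> hom C X T"
    and trm_un: "\<And>X f g. X \<in> Obj C \<Longrightarrow> f \<in> hom C X T \<Longrightarrow> g \<in> hom C X T \<Longrightarrow> f = g"
  shows "zero_object C T"
proof -
  have ZO: "Z \<in> Obj C" using Z by (rule zo_obj)
  obtain s where s: "s \<in> hom C T Z" using zo_to_ex[OF Z T] by blast
  obtain t where t: "t \<in> hom C Z T" using zo_from_ex[OF Z T] by blast
  have "Cmp C t s \<in> hom C T T" "Idm C T \<in> hom C T T" using s t T C by (auto simp: hom_def cs)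
  then have ts: "Cmp C t s = Idm C T" using trm_un T by blast
  have fr: "\<exists>!f. f \<in> hom C T X" if X: "X \<in> Obj C" for X
  proof -
    obtain e where e: "e \<in> hom C Z X" using zo_from_ex[OF Z X] by blast
    have ex: "Cmp C e s \<in> hom C T X" using e s C by (auto simp: hom_def cs)
    have un: "u = v" if u: "u \<in> hom C T X" and v: "v \<in> hom C T X" for u v
    proof -
      have "Cmp C u t \<in> hom C Z X" "Cmp C v t \<in> hom C Z X" using u v t C by (auto simp: hom_def cs)
      then have ut: "Cmp C u t = Cmp C v t" using zo_from_un[OF Z X] by blast
      have "u = Cmp C u (Cmp C t s)" using ts u id_r[OF C] by (simp add: hom_def)
      also have "\<dots> = Cmp C (Cmp C u t) s" using assoc[OF C, of s t u] s t u by (simp add: hom_def)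
      also have "\<dots> = Cmp C (Cmp C v t) s" using ut by simp
      also have "\<dots> = Cmp C v (Cmp C t s)" using assoc[OF C, of s t v] s t v by (simp add: hom_def)
      also have "\<dots> = v" using ts v id_r[OF C] by (simp add: hom_def)
      finally show ?thesis .
    qed
    show ?thesis apply (rule ex1I[where P="\<lambda>f. f \<in> hom C T X", OF ex]) using un ex by blast
  qed
  have to: "\<exists>!f. f \<in> hom C X T" if X: "X \<in> Obj C" for X
  proof -
    obtain f where f: "f \<in> hom C X T" using trm_ex[OF X] by blast
    show ?thesis apply (rule ex1I[where P="\<lambda>f. f \<in> hom C X T", OF f]) using trm_un[OF X] f by blast
  qed
  show ?thesis unfolding zero_object_def using T fr to by blast
qed

lemma initial_zero:
  assumes C: "category C" and Z: "zero_object C Z" and T: "T \<in> Obj C"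
    and ex: "\<And>X. X \<in> Obj C \<Longrightarrow> \<exists>f. f \<in> hom C T X"
    and un: "\<And>X f g. X \<in> Obj C \<Longrightarrow> f \<in> hom C T X \<Longrightarrow> g \<in> hom C T X \<Longrightarrow> f = g"
  shows "zero_object C T"
  using terminal_zero[of "op C" Z T] op_category[OF C] Z T ex un by simp

lemma functor_zero:
  assumes C: "category C" and D: "category D" and F: "is_functor C D F0 F1"
    and pz: "\<And>Z. zero_object C Z \<Longrightarrow> zero_object D (F0 Z)"
    and z: "zero_arrow C z"
  shows "zero_arrow D (F1 z)"
proof -
  from z obtain Z p q where Z: "zero_object C Z" and p: "p \<in> hom C (Dom C z) Z"
    and q: "q \<in> hom C Z (Cod C z)" and zq: "z = Cmp C q p" unfolding zero_arrow_def by blast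
  have za: "z \<in> Arr C" using z unfolding zero_arrow_def by blast
  have e: "F1 z = Cmp D (F1 q) (F1 p)" using zq fcmp[OF F] p q by (simp add: hom_def)
  have "F1 p \<in> hom D (Dom D (F1 z)) (F0 Z)" "F1 q \<in> hom D (F0 Z) (Cod D (F1 z))"
    "F1 z \<in> Arr D"
    using p q za F by (auto simp: hom_def fs)
  then show ?thesis unfolding zero_arrow_def using pz[OF Z] e by blast
qed



lemma ex1_two: "\<exists>!x. P x \<Longrightarrow> P a \<Longrightarrow> P b \<Longrightarrow> a = b"
  by blast

locale adj =
  fixes C :: "('a,'b) cat" and D :: "('c,'d) cat" and L0 :: "'a \<Rightarrow> 'c" and L1 :: "'b \<Rightarrow> 'd"
    and G0 :: "'c \<Rightarrow> 'a" and G1 :: "'d \<Rightarrow> 'b" and eta :: "'a \<Rightarrow> 'b"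
  assumes catC: "category C" and catD: "category D"
    and LF: "is_functor C D L0 L1" and GF: "is_functor D C G0 G1"
    and eta: "X \<in> Obj C \<Longrightarrow> eta X \<in> hom C X (G0 (L0 X))"
    and nat: "h \<in> Arr C \<Longrightarrow> Cmp C (G1 (L1 h)) (eta (Dom C h)) = Cmp C (eta (Cod C h)) h"
    and univ_ex: "X \<in> Obj C \<Longrightarrow> Y \<in> Obj D \<Longrightarrow> g \<in> hom C X (G0 Y) \<Longrightarrow>
        \<exists>f. f \<in> hom D (L0 X) Y \<and> Cmp C (G1 f) (eta X) = g"
    and univ_un: "X \<in> Obj C \<Longrightarrow> Y \<in> Obj D \<Longrightarrow> f \<in> hom D (L0 X) Y \<Longrightarrow> f' \<in> hom D (L0 X) Y \<Longrightarrow>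
        Cmp C (G1 f) (eta X) = Cmp C (G1 f') (eta X) \<Longrightarrow> f = f'"

lemma adjunction_adj:
  assumes "category C" "category D" "adjunction C D L0 L1 G0 G1"
  shows "\<exists>eta. adj C D L0 L1 G0 G1 eta"
proof -
  obtain eta where e: "\<forall>X\<in>Obj C. eta X \<in> hom C X (G0 (L0 X))"
     "\<forall>h\<in>Arr C. Cmp C (G1 (L1 h)) (eta (Dom C h)) = Cmp C (eta (Cod C h)) h"
     "\<forall>X\<in>Obj C. \<forall>Y\<in>Obj D. \<forall>g\<in>hom C X (G0 Y). \<exists>!f. f \<in> hom D (L0 X) Y \<and> Cmp C (G1 f) (eta X) = g"
    and F: "is_functor C D L0 L1" "is_functor D C G0 G1"
    using assms(3) unfolding adjunction_def by blast
  have un: "f = f'" if X: "X \<in> Obj C" and Y: "Y \<in> Obj D" and f: "f \<in> hom D (L0 X) Y" and f': "f' \<in> hom D (L0 X) Y"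
     and eq: "Cmp C (G1 f) (eta X) = Cmp C (G1 f') (eta X)" for X Y f f'
  proof -
    have gh: "Cmp C (G1 f) (eta X) \<in> hom C X (G0 Y)" using e(1) X f F assms(1,2)
      by (auto simp: hom_def cs fs)
    have "\<exists>!h. h \<in> hom D (L0 X) Y \<and> Cmp C (G1 h) (eta X) = Cmp C (G1 f) (eta X)"
      using bspec[OF bspec[OF bspec[OF e(3) X] Y] gh] .
    from ex1_two[OF this] show ?thesis using f f' eq by simp
  qed
  have ex: "\<exists>f. f \<in> hom D (L0 X) Y \<and> Cmp C (G1 f) (eta X) = g"
    if "X \<in> Obj C" "Y \<in> Obj D" "g \<in> hom C X (G0 Y)" for X Y g
  proof -
    have "\<exists>!f. f \<in> hom D (L0 X) Y \<and> Cmp C (G1 f) (eta X) = g" using bspec[OF bspec[OF bspec[OF e(3) that(1)] that(2)] that(3)] .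
    then show ?thesis by (rule ex1_implies_ex)
  qed
  have "adj C D L0 L1 G0 G1 eta"
    apply (rule adj.intro)
    using assms(1,2) F apply simp_all
    using e(1) apply blast
    using e(2) apply blast
    using ex apply blast
    using un apply blast
    done
  then show ?thesis by blast
qed

context adj begin

lemmas S = cs[OF catC] cs[OF catD] fs[OF LF] fs[OF GF] hom_def

lemma eta_simps: "X \<in> Obj C \<Longrightarrow> eta X \<in> Arr C" "X \<in> Obj C \<Longrightarrow> Dom C (eta X) = X"
  "X \<in> Obj C \<Longrightarrow> Cod C (eta X) = G0 (L0 X)"
  using eta by (auto simp: hom_def)

lemma right_zero:
  assumes Z: "zero_object D Z" and ZC: "zero_object C Z'"
  shows "zero_object C (G0 Z)"
proof (rule terminal_zero[OF catC ZC])
  have ZO: "Z \<in> Obj D" using Z by (rule zo_obj)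
  show "G0 Z \<in> Obj C" using ZO by (simp add: S)
  show "\<exists>f. f \<in> hom C X (G0 Z)" if X: "X \<in> Obj C" for X
  proof -
    obtain f0 where "f0 \<in> hom D (L0 X) Z" using zo_to_ex[OF Z fobj[OF LF X]] by blast
    then have "Cmp C (G1 f0) (eta X) \<in> hom C X (G0 Z)" using X by (simp add: S eta_simps)
    then show ?thesis by blast
  qed
  show "f = g" if X: "X \<in> Obj C" and f: "f \<in> hom C X (G0 Z)" and g: "g \<in> hom C X (G0 Z)" for X f g
  proof -
    obtain f' where f': "f' \<in> hom D (L0 X) Z" "Cmp C (G1 f') (eta X) = f" using univ_ex[OF X ZO f] by blast
    obtain g' where g': "g' \<in> hom D (L0 X) Z" "Cmp C (G1 g') (eta X) = g" using univ_ex[OF X ZO g] by blast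
    have "f' = g'" by (rule zo_to_un[OF Z fobj[OF LF X] f'(1) g'(1)])
    then show ?thesis using f' g' by simp
  qed
qed

lemma left_zero:
  assumes Z: "zero_object C Z" and ZD: "zero_object D Z'"
  shows "zero_object D (L0 Z)"
proof (rule initial_zero[OF catD ZD])
  have ZO: "Z \<in> Obj C" using Z by (rule zo_obj)
  show "L0 Z \<in> Obj D" using ZO by (simp add: S)
  show "\<exists>f. f \<in> hom D (L0 Z) Y" if Y: "Y \<in> Obj D" for Y
  proof -
    obtain t where "t \<in> hom C Z (G0 Y)" using zo_from_ex[OF Z fobj[OF GF Y]] by blast
    then show ?thesis using univ_ex[OF ZO Y] by blast
  qed
  show "f = g" if Y: "Y \<in> Obj D" and f: "f \<in> hom D (L0 Z) Y" and g: "g \<in> hom D (L0 Z) Y" for Y f g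
  proof -
    have h1: "Cmp C (G1 f) (eta Z) \<in> hom C Z (G0 Y)" and h2: "Cmp C (G1 g) (eta Z) \<in> hom C Z (G0 Y)"
      using f g ZO by (auto simp: S eta_simps)
    have "Cmp C (G1 f) (eta Z) = Cmp C (G1 g) (eta Z)" by (rule zo_from_un[OF Z fobj[OF GF Y] h1 h2])
    then show ?thesis using univ_un[OF ZO Y f g] by simp
  qed
qed

end


lemma kernelD:
  assumes k: "is_kernel C f k"
  shows kD_f: "f \<in> Arr C" and kD_k: "k \<in> Arr C" and kD_cod: "Cod C k = Dom C f"
    and kD_zero: "zero_arrow C (Cmp C f k)"
    and kD_ex: "g \<in> Arr C \<Longrightarrow> Cod C g = Dom C f \<Longrightarrow> zero_arrow C (Cmp C f g) \<Longrightarrow>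
       \<exists>u. u \<in> hom C (Dom C g) (Dom C k) \<and> Cmp C k u = g"
    and kD_un: "g \<in> Arr C \<Longrightarrow> Cod C g = Dom C f \<Longrightarrow> zero_arrow C (Cmp C f g) \<Longrightarrow>
       u \<in> hom C (Dom C g) (Dom C k) \<Longrightarrow> Cmp C k u = g \<Longrightarrow>
       u' \<in> hom C (Dom C g) (Dom C k) \<Longrightarrow> Cmp C k u' = g \<Longrightarrow> u = u'"
proof -
  have A: "f \<in> Arr C" "k \<in> Arr C" "Cod C k = Dom C f" "zero_arrow C (Cmp C f k)"
    and U: "\<forall>g\<in>Arr C. Cod C g = Dom C f \<and> zero_arrow C (Cmp C f g) \<longrightarrow>
        (\<exists>!u. u \<in> hom C (Dom C g) (Dom C k) \<and> Cmp C k u = g)"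
    using k unfolding is_kernel_def by blast+
  show "f \<in> Arr C" "k \<in> Arr C" "Cod C k = Dom C f" "zero_arrow C (Cmp C f k)" using A by auto
  assume g: "g \<in> Arr C" "Cod C g = Dom C f" "zero_arrow C (Cmp C f g)"
  then have E: "\<exists>!u. u \<in> hom C (Dom C g) (Dom C k) \<and> Cmp C k u = g" using U by simp
  then show "\<exists>u. u \<in> hom C (Dom C g) (Dom C k) \<and> Cmp C k u = g" by (rule ex1_implies_ex)
  show "u \<in> hom C (Dom C g) (Dom C k) \<Longrightarrow> Cmp C k u = g \<Longrightarrow>
       u' \<in> hom C (Dom C g) (Dom C k) \<Longrightarrow> Cmp C k u' = g \<Longrightarrow> u = u'"
    using ex1_two[OF E] by simp
qed

lemma kernelI:
  assumes "f \<in> Arr C" "k \<in> Arr C" "Cod C k = Dom C f" "zero_arrow C (Cmp C f k)"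
    and ex: "\<And>g. g \<in> Arr C \<Longrightarrow> Cod C g = Dom C f \<Longrightarrow> zero_arrow C (Cmp C f g) \<Longrightarrow>
       \<exists>u. u \<in> hom C (Dom C g) (Dom C k) \<and> Cmp C k u = g"
    and un: "\<And>g u u'. g \<in> Arr C \<Longrightarrow> Cod C g = Dom C f \<Longrightarrow> zero_arrow C (Cmp C f g) \<Longrightarrow>
       u \<in> hom C (Dom C g) (Dom C k) \<Longrightarrow> Cmp C k u = g \<Longrightarrow>
       u' \<in> hom C (Dom C g) (Dom C k) \<Longrightarrow> Cmp C k u' = g \<Longrightarrow> u = u'"
  shows "is_kernel C f k"
proof -
  have "\<exists>!u. u \<in> hom C (Dom C g) (Dom C k) \<and> Cmp C k u = g"
    if gg: "g \<in> Arr C" "Cod C g = Dom C f" "zero_arrow C (Cmp C f g)" for g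
  proof -
    obtain u where u: "u \<in> hom C (Dom C g) (Dom C k) \<and> Cmp C k u = g" using ex[OF gg] by blast
    show ?thesis
      apply (rule ex1I[where P="\<lambda>u. u \<in> hom C (Dom C g) (Dom C k) \<and> Cmp C k u = g", OF u])
      using un[OF gg] u by blast
  qed
  then show ?thesis unfolding is_kernel_def using assms(1-4) by blast
qed

lemma cokernelD:
  assumes k: "is_cokernel C f c"
  shows cD_f: "f \<in> Arr C" and cD_c: "c \<in> Arr C" and cD_dom: "Dom C c = Cod C f"
    and cD_zero: "zero_arrow C (Cmp C c f)"
    and cD_ex: "g \<in> Arr C \<Longrightarrow> Dom C g = Cod C f \<Longrightarrow> zero_arrow C (Cmp C g f) \<Longrightarrow>
       \<exists>u. u \<in> hom C (Cod C c) (Cod C g) \<and> Cmp C u c = g"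
    and cD_un: "g \<in> Arr C \<Longrightarrow> Dom C g = Cod C f \<Longrightarrow> zero_arrow C (Cmp C g f) \<Longrightarrow>
       u \<in> hom C (Cod C c) (Cod C g) \<Longrightarrow> Cmp C u c = g \<Longrightarrow>
       u' \<in> hom C (Cod C c) (Cod C g) \<Longrightarrow> Cmp C u' c = g \<Longrightarrow> u = u'"
  using kernelD[of "op C" f c] k by auto

lemma cokernelI:
  assumes "f \<in> Arr C" "c \<in> Arr C" "Dom C c = Cod C f" "zero_arrow C (Cmp C c f)"
    and ex: "\<And>g. g \<in> Arr C \<Longrightarrow> Dom C g = Cod C f \<Longrightarrow> zero_arrow C (Cmp C g f) \<Longrightarrow>
       \<exists>u. u \<in> hom C (Cod C c) (Cod C g) \<and> Cmp C u c = g"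
    and un: "\<And>g u u'. g \<in> Arr C \<Longrightarrow> Dom C g = Cod C f \<Longrightarrow> zero_arrow C (Cmp C g f) \<Longrightarrow>
       u \<in> hom C (Cod C c) (Cod C g) \<Longrightarrow> Cmp C u c = g \<Longrightarrow>
       u' \<in> hom C (Cod C c) (Cod C g) \<Longrightarrow> Cmp C u' c = g \<Longrightarrow> u = u'"
  shows "is_cokernel C f c"
  using kernelI[of f "op C" c] assms by auto

lemma kernel_mono:
  assumes C: "category C" and k: "is_kernel C f k"
  shows "mono C k"
  unfolding mono_def
proof (intro conjI ballI impI)
  show "k \<in> Arr C" by (rule kD_k[OF k])
  fix a b assume a: "a \<in> Arr C" and b: "b \<in> Arr C"
    and hh: "Cod C a = Dom C k \<and> Cod C b = Dom C k \<and> Dom C a = Dom C b \<and> Cmp C k a = Cmp C k b"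
  have h: "Cod C a = Dom C k" "Cod C b = Dom C k" "Dom C a = Dom C b" using hh by auto
  have hab: "Cmp C k a = Cmp C k b" using hh by auto
  note kk = kD_f[OF k] kD_k[OF k] kD_cod[OF k] kD_zero[OF k]
  have g: "Cmp C k a \<in> Arr C" "Cod C (Cmp C k a) = Dom C f" "Dom C (Cmp C k a) = Dom C a"
    using a h kk C by (auto simp: cs)
  have "Cmp C f (Cmp C k a) = Cmp C (Cmp C f k) a" using assoc[OF C a kk(2) kk(1)] h kk by simp
  then have z: "zero_arrow C (Cmp C f (Cmp C k a))"
    using zero_cmp_right[OF C kk(4) a] h kk C by (simp add: cs)
  show "a = b"
    apply (rule kD_un[OF k g(1,2) z, of a b])
    using a b h g hab by (auto simp: hom_def)
qed

lemma cokernel_epi: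
  assumes C: "category C" and k: "is_cokernel C f c"
  shows "epi C c"
  using kernel_mono[of "op C" f c] op_category[OF C] k by simp



lemma zero_exists:
  assumes C: "category C" and Z: "zero_object C Z" and X: "X \<in> Obj C" and Y: "Y \<in> Obj C"
  shows "\<exists>z. zero_arrow C z \<and> z \<in> hom C X Y"
proof -
  obtain p where p: "p \<in> hom C X Z" using zo_to_ex[OF Z X] by blast
  obtain q where q: "q \<in> hom C Z Y" using zo_from_ex[OF Z Y] by blast
  have "Cmp C q p \<in> hom C X Y" using p q C by (auto simp: hom_def cs)
  moreover have "zero_arrow C (Cmp C q p)"
    unfolding zero_arrow_def using calculation p q Z by (auto simp: hom_def)
  ultimately show ?thesis by blast
qed


context adj begin

lemma G_zero:
  assumes zC: "zero_object C ZC" and z: "zero_arrow D z"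
  shows "zero_arrow C (G1 z)"
  using functor_zero[OF catD catC GF _ z] right_zero[OF _ zC] by blast

lemma L_zero:
  assumes zD: "zero_object D ZD" and z: "zero_arrow C z"
  shows "zero_arrow D (L1 z)"
  using functor_zero[OF catC catD LF _ z] left_zero[OF _ zD] by blast

lemma transpose_zero:
  assumes zC: "zero_object C ZC" and zD: "zero_object D ZD"
    and X: "X \<in> Obj C" and h: "h \<in> hom D (L0 X) Y"
    and z: "zero_arrow C (Cmp C (G1 h) (eta X))"
  shows "zero_arrow D h"
proof -
  have Y: "Y \<in> Obj D" using h by (auto simp: S)
  obtain z0 where z0: "zero_arrow D z0" "z0 \<in> hom D (L0 X) Y"
    using zero_exists[OF catD zD fobj[OF LF X] Y] by blast
  have "zero_arrow C (Cmp C (G1 z0) (eta X))"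
    using zero_cmp_right[OF catC G_zero[OF zC z0(1)]] X z0 by (simp add: S eta_simps)
  then have "Cmp C (G1 z0) (eta X) = Cmp C (G1 h) (eta X)"
    using zero_arrow_unique[OF catC _ z] X z0 h by (simp add: S eta_simps)
  then have "z0 = h" using univ_un[OF X Y z0(2) h] by simp
  then show ?thesis using z0 by simp
qed

lemma G_kernel:
  assumes zC: "zero_object C ZC" and zD: "zero_object D ZD"
    and k: "is_kernel D g k"
  shows "is_kernel C (G1 g) (G1 k)"
proof -
  note kk = kD_f[OF k] kD_k[OF k] kD_cod[OF k] kD_zero[OF k]
  have gk: "Cmp C (G1 g) (G1 k) = G1 (Cmp D g k)" using fcmp[OF GF kk(2,1,3)] by simp
  show ?thesis
  proof (rule kernelI)
    show "G1 g \<in> Arr C" "G1 k \<in> Arr C" "Cod C (G1 k) = Dom C (G1 g)" using kk by (auto simp: S)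
    show "zero_arrow C (Cmp C (G1 g) (G1 k))" using gk G_zero[OF zC kk(4)] by simp
  next
    fix h assume h: "h \<in> Arr C" "Cod C h = Dom C (G1 g)" "zero_arrow C (Cmp C (G1 g) h)"
    define X where "X = Dom C h"
    have X: "X \<in> Obj C" using h(1) by (simp add: X_def S)
    have hh: "h \<in> hom C X (G0 (Dom D g))" using h kk by (simp add: X_def S)
    obtain h' where h': "h' \<in> hom D (L0 X) (Dom D g)" "Cmp C (G1 h') (eta X) = h"
      using univ_ex[OF X _ hh] kk by (auto simp: S)
    have gh'_hom: "Cmp D g h' \<in> hom D (L0 X) (Cod D g)" using h' kk by (auto simp: S)
    have "Cmp C (G1 (Cmp D g h')) (eta X) = Cmp C (Cmp C (G1 g) (G1 h')) (eta X)"
      using fcmp[OF GF] h' kk by (simp add: S)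
    also have "\<dots> = Cmp C (G1 g) (Cmp C (G1 h') (eta X))"
      using assoc[OF catC, of "eta X" "G1 h'" "G1 g"] h' kk X by (simp add: S eta_simps)
    also have "\<dots> = Cmp C (G1 g) h" using h' by simp
    finally have "zero_arrow C (Cmp C (G1 (Cmp D g h')) (eta X))" using h(3) by simp
    then have zgh: "zero_arrow D (Cmp D g h')" using transpose_zero[OF zC zD X gh'_hom] by simp
    obtain u where u: "u \<in> hom D (Dom D h') (Dom D k)" "Cmp D k u = h'"
      using kD_ex[OF k _ _ zgh] h' by (auto simp: hom_def)
    have "Cmp C (G1 u) (eta X) \<in> hom C (Dom C h) (Dom C (G1 k))"
      using u h' X kk by (auto simp: S eta_simps X_def)
    moreover have "Cmp C (G1 k) (Cmp C (G1 u) (eta X)) = h"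
    proof -
      have "Cmp C (G1 k) (Cmp C (G1 u) (eta X)) = Cmp C (Cmp C (G1 k) (G1 u)) (eta X)"
        using assoc[OF catC, of "eta X" "G1 u" "G1 k"] u h' kk X by (simp add: S eta_simps)
      also have "\<dots> = Cmp C (G1 (Cmp D k u)) (eta X)" using fcmp[OF GF] u(1) kk h'(1) by (simp add: S)
      finally show ?thesis using u h' by simp
    qed
    ultimately show "\<exists>u. u \<in> hom C (Dom C h) (Dom C (G1 k)) \<and> Cmp C (G1 k) u = h" by blast
  next
    fix h v1 v2 assume h: "h \<in> Arr C" "Cod C h = Dom C (G1 g)" "zero_arrow C (Cmp C (G1 g) h)"
      and v1: "v1 \<in> hom C (Dom C h) (Dom C (G1 k))" "Cmp C (G1 k) v1 = h"
      and v2: "v2 \<in> hom C (Dom C h) (Dom C (G1 k))" "Cmp C (G1 k) v2 = h"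
    define X where "X = Dom C h"
    have X: "X \<in> Obj C" using h(1) by (simp add: X_def S)
    have K: "Dom D k \<in> Obj D" using kk by (simp add: S)
    obtain w1 where w1: "w1 \<in> hom D (L0 X) (Dom D k)" "Cmp C (G1 w1) (eta X) = v1"
      using univ_ex[OF X K] v1 kk by (auto simp: S X_def)
    obtain w2 where w2: "w2 \<in> hom D (L0 X) (Dom D k)" "Cmp C (G1 w2) (eta X) = v2"
      using univ_ex[OF X K] v2 kk by (auto simp: S X_def)
    have e: "Cmp C (G1 (Cmp D k w)) (eta X) = h" if w: "w \<in> hom D (L0 X) (Dom D k)"
      "Cmp C (G1 w) (eta X) = v" "Cmp C (G1 k) v = h" for w v
    proof -
      have "Cmp C (G1 (Cmp D k w)) (eta X) = Cmp C (Cmp C (G1 k) (G1 w)) (eta X)"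
        using fcmp[OF GF] w kk by (simp add: S)
      also have "\<dots> = Cmp C (G1 k) (Cmp C (G1 w) (eta X))"
        using assoc[OF catC, of "eta X" "G1 w" "G1 k"] w kk X by (simp add: S eta_simps)
      finally show ?thesis using w by simp
    qed
    have "Cmp D k w1 = Cmp D k w2"
      apply (rule univ_un[OF X, of "Dom D g"])
      using w1 w2 kk e[OF w1 v1(2)] e[OF w2 v2(2)] by (auto simp: S)
    then have "w1 = w2" using kernel_mono[OF catD k] w1 w2 unfolding mono_def by (auto simp: hom_def)
    then show "v1 = v2" using w1 w2 by simp
  qed
qed

end


context adj begin

lemma transpose_cmp:
  assumes a: "a \<in> hom C X Y" and v: "v \<in> hom D (L0 Y) W"
  shows "Cmp C (Cmp C (G1 v) (eta Y)) a = Cmp C (G1 (Cmp D v (L1 a))) (eta X)"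
proof -
  have X: "X \<in> Obj C" and Y: "Y \<in> Obj C" using a by (auto simp: S)
  have "Cmp C (Cmp C (G1 v) (eta Y)) a = Cmp C (G1 v) (Cmp C (eta Y) a)"
    using assoc[OF catC, of a "eta Y" "G1 v"] a v Y by (simp add: S eta_simps)
  also have "\<dots> = Cmp C (G1 v) (Cmp C (G1 (L1 a)) (eta X))" using nat[of a] a by (simp add: hom_def)
  also have "\<dots> = Cmp C (Cmp C (G1 v) (G1 (L1 a))) (eta X)"
    using assoc[OF catC, of "eta X" "G1 (L1 a)" "G1 v"] a v X by (simp add: S eta_simps)
  also have "\<dots> = Cmp C (G1 (Cmp D v (L1 a))) (eta X)" using fcmp[OF GF, of "L1 a" v] a v by (simp add: S)
  finally show ?thesis .
qed

lemma L_cokernel: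
  assumes zC: "zero_object C ZC" and zD: "zero_object D ZD"
    and c: "is_cokernel C f c"
  shows "is_cokernel D (L1 f) (L1 c)"
proof -
  note cc = cD_f[OF c] cD_c[OF c] cD_dom[OF c] cD_zero[OF c]
  define Y where "Y = Cod C f"
  define X where "X = Dom C f"
  define Q where "Q = Cod C c"
  have fh: "f \<in> hom C X Y" and ch: "c \<in> hom C Y Q" using cc by (auto simp: hom_def X_def Y_def Q_def)
  have XYQ: "X \<in> Obj C" "Y \<in> Obj C" "Q \<in> Obj C" using fh ch by (auto simp: S)
  have key: "zero_arrow C (Cmp C (Cmp C (G1 h) (eta Y)) f)"
    if h: "h \<in> Arr D" "Dom D h = L0 Y" "zero_arrow D (Cmp D h (L1 f))" for h
  proof -
    have "Cmp C (Cmp C (G1 h) (eta Y)) f = Cmp C (G1 (Cmp D h (L1 f))) (eta X)"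
      using transpose_cmp[OF fh, of h "Cod D h"] h by (simp add: hom_def)
    then show ?thesis using zero_cmp_right[OF catC G_zero[OF zC h(3)], of "eta X"] h fh XYQ
      by (simp add: S eta_simps)
  qed
  have hsA: "Cmp C (G1 h) (eta Y) \<in> Arr C" "Dom C (Cmp C (G1 h) (eta Y)) = Cod C f"
    "Cod C (Cmp C (G1 h) (eta Y)) = G0 (Cod D h)"
    if h: "h \<in> Arr D" "Dom D h = L0 Y" for h
    using h XYQ by (auto simp: S eta_simps Y_def)
  show ?thesis
  proof (rule cokernelI)
    show "L1 f \<in> Arr D" "L1 c \<in> Arr D" "Dom D (L1 c) = Cod D (L1 f)" using cc by (auto simp: S)
    show "zero_arrow D (Cmp D (L1 c) (L1 f))" using fcmp[OF LF cc(1,2)] cc L_zero[OF zD cc(4)] by simp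
  next
    fix h assume h: "h \<in> Arr D" "Dom D h = Cod D (L1 f)" "zero_arrow D (Cmp D h (L1 f))"
    have h2: "Dom D h = L0 Y" using h cc by (simp add: S Y_def)
    note hs = hsA[OF h(1) h2]
    define W where "W = Cod D h"
    have W: "W \<in> Obj D" using h by (simp add: S W_def)
    obtain u where u: "u \<in> hom C (Cod C c) (Cod C (Cmp C (G1 h) (eta Y)))"
        "Cmp C u c = Cmp C (G1 h) (eta Y)"
      using cD_ex[OF c hs(1) hs(2) key[OF h(1) h2 h(3)]] by blast
    have uh: "u \<in> hom C Q (G0 W)" using u hs by (simp add: Q_def W_def)
    obtain u' where u': "u' \<in> hom D (L0 Q) W" "Cmp C (G1 u') (eta Q) = u"
      using univ_ex[OF XYQ(3) W uh] by blast
    have "Cmp D u' (L1 c) = h"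
    proof (rule univ_un[OF XYQ(2) W])
      show "Cmp D u' (L1 c) \<in> hom D (L0 Y) W" using u' ch by (auto simp: S)
      show "h \<in> hom D (L0 Y) W" using h h2 by (simp add: hom_def W_def)
      have "Cmp C (G1 (Cmp D u' (L1 c))) (eta Y) = Cmp C u c"
        using transpose_cmp[OF ch u'(1)] u'(2) by simp
      then show "Cmp C (G1 (Cmp D u' (L1 c))) (eta Y) = Cmp C (G1 h) (eta Y)" using u(2) by simp
    qed
    moreover have "u' \<in> hom D (Cod D (L1 c)) (Cod D h)" using u' cc by (simp add: S Q_def W_def)
    ultimately show "\<exists>u. u \<in> hom D (Cod D (L1 c)) (Cod D h) \<and> Cmp D u (L1 c) = h" by blast
  next
    fix h v1 v2 assume h: "h \<in> Arr D" "Dom D h = Cod D (L1 f)" "zero_arrow D (Cmp D h (L1 f))"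
      and v1: "v1 \<in> hom D (Cod D (L1 c)) (Cod D h)" "Cmp D v1 (L1 c) = h"
      and v2: "v2 \<in> hom D (Cod D (L1 c)) (Cod D h)" "Cmp D v2 (L1 c) = h"
    have h2: "Dom D h = L0 Y" using h cc by (simp add: S Y_def)
    note hs = hsA[OF h(1) h2]
    define W where "W = Cod D h"
    have W: "W \<in> Obj D" using h by (simp add: S W_def)
    have v1h: "v1 \<in> hom D (L0 Q) W" and v2h: "v2 \<in> hom D (L0 Q) W"
      using v1 v2 cc by (auto simp: S Q_def W_def)
    have t1: "Cmp C (Cmp C (G1 v1) (eta Q)) c = Cmp C (G1 h) (eta Y)"
      using transpose_cmp[OF ch v1h] v1(2) by simp
    have t2: "Cmp C (Cmp C (G1 v2) (eta Q)) c = Cmp C (G1 h) (eta Y)"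
      using transpose_cmp[OF ch v2h] v2(2) by simp
    have "Cmp C (G1 v1) (eta Q) = Cmp C (G1 v2) (eta Q)"
    proof (rule cD_un[OF c hs(1) hs(2) key[OF h(1) h2 h(3)]])
      show "Cmp C (G1 v1) (eta Q) \<in> hom C (Cod C c) (Cod C (Cmp C (G1 h) (eta Y)))"
        using v1h hs XYQ by (auto simp: S eta_simps Q_def W_def)
      show "Cmp C (G1 v2) (eta Q) \<in> hom C (Cod C c) (Cod C (Cmp C (G1 h) (eta Y)))"
        using v2h hs XYQ by (auto simp: S eta_simps Q_def W_def)
    qed (use t1 t2 in auto)
    then show "v1 = v2" using univ_un[OF XYQ(3) W v1h v2h] by simp
  qed
qed

end


lemma cmp_hom: "category C \<Longrightarrow> f \<in> hom C X Y \<Longrightarrow> g \<in> hom C Y Z \<Longrightarrow> Cmp C g f \<in> hom C X Z"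
  by (auto simp: hom_def cs)

lemma assoc_hom: "category C \<Longrightarrow> f \<in> hom C W X \<Longrightarrow> g \<in> hom C X Y \<Longrightarrow> h \<in> hom C Y Z \<Longrightarrow>
    Cmp C h (Cmp C g f) = Cmp C (Cmp C h g) f"
  by (auto simp: hom_def assoc)

lemma id_hom: "category C \<Longrightarrow> X \<in> Obj C \<Longrightarrow> Idm C X \<in> hom C X X"
  by (auto simp: hom_def cs)

lemma id_l_hom: "category C \<Longrightarrow> f \<in> hom C X Y \<Longrightarrow> Cmp C (Idm C Y) f = f"
  by (auto simp: hom_def id_l)

lemma id_r_hom: "category C \<Longrightarrow> f \<in> hom C X Y \<Longrightarrow> Cmp C f (Idm C X) = f"
  by (auto simp: hom_def id_r)

lemma fhom: "is_functor C D F0 F1 \<Longrightarrow> f \<in> hom C X Y \<Longrightarrow> F1 f \<in> hom D (F0 X) (F0 Y)"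
  by (auto simp: hom_def fs)

lemma fcmp_hom: "is_functor C D F0 F1 \<Longrightarrow> f \<in> hom C X Y \<Longrightarrow> g \<in> hom C Y Z \<Longrightarrow>
   F1 (Cmp C g f) = Cmp D (F1 g) (F1 f)"
  by (auto simp: hom_def fcmp)

lemma ff_full: "fully_faithful D C G0 G1 \<Longrightarrow> X \<in> Obj D \<Longrightarrow> Y \<in> Obj D \<Longrightarrow>
   f' \<in> hom C (G0 X) (G0 Y) \<Longrightarrow> \<exists>f. f \<in> hom D X Y \<and> G1 f = f'"
  unfolding fully_faithful_def bij_betw_def by (metis imageE)

lemma ff_faithful: "fully_faithful D C G0 G1 \<Longrightarrow> X \<in> Obj D \<Longrightarrow> Y \<in> Obj D \<Longrightarrow>
   f \<in> hom D X Y \<Longrightarrow> g \<in> hom D X Y \<Longrightarrow> G1 f = G1 g \<Longrightarrow> f = g"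
  unfolding fully_faithful_def bij_betw_def inj_on_def by blast

lemma transfer:
  assumes C: "category C" and D: "category D" and G: "is_functor D C G0 G1"
    and ff: "fully_faithful D C G0 G1"
    and kex: "\<And>f. f \<in> Arr D \<Longrightarrow> \<exists>k. is_kernel D f k"
    and pres: "\<And>g k. is_kernel D g k \<Longrightarrow> is_kernel C (G1 g) (G1 k)"
    and M: "M \<in> Obj D" and N: "N \<in> Obj D"
  shows "strongly_rickart D M N \<longleftrightarrow> strongly_rickart C (G0 M) (G0 N)"
proof
  assume SC: "strongly_rickart C (G0 M) (G0 N)"
  show "strongly_rickart D M N" unfolding strongly_rickart_def
  proof (intro ballI allI impI)
    fix g k assume g: "g \<in> hom D M N" and k: "is_kernel D g k"
    define K where "K = Dom D k"
    have kh: "k \<in> hom D K M" using kD_k[OF k] kD_cod[OF k] g by (simp add: hom_def K_def)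
    have Kobj: "K \<in> Obj D" using dom_obj[OF D kD_k[OF k]] K_def by simp
    have Gk: "is_kernel C (G1 g) (G1 k)" by (rule pres[OF k])
    have "G1 g \<in> hom C (G0 M) (G0 N)" by (rule fhom[OF G g])
    then have sf: "is_section C (G1 k) \<and> fully_invariant C (G1 k)"
      using SC Gk unfolding strongly_rickart_def by blast
    have Gkh: "G1 k \<in> hom C (G0 K) (G0 M)" by (rule fhom[OF G kh])
    have dGk: "Dom C (G1 k) = G0 K" "Cod C (G1 k) = G0 M" using Gkh by (auto simp: hom_def)
    show "is_section D k \<and> fully_invariant D k"
    proof
      obtain r' where r': "r' \<in> hom C (G0 M) (G0 K)" "Cmp C r' (G1 k) = Idm C (G0 K)"
        using sf dGk unfolding is_section_def by auto
      obtain r where r: "r \<in> hom D M K" "G1 r = r'" using ff_full[OF ff M Kobj r'(1)] by blast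
      have "G1 (Cmp D r k) = G1 (Idm D K)"
        using fcmp_hom[OF G kh r(1)] r r'(2) fid[OF G Kobj] by simp
      then have "Cmp D r k = Idm D K"
        using ff_faithful[OF ff Kobj Kobj] cmp_hom[OF D kh r(1)] id_hom[OF D Kobj] by blast
      then show "is_section D k" unfolding is_section_def using r kh by (auto simp: hom_def K_def)
    next
      show "fully_invariant D k" unfolding fully_invariant_def
      proof (intro conjI ballI)
        show "mono D k" by (rule kernel_mono[OF D k])
        fix h assume h: "h \<in> hom D (Cod D k) (Cod D k)"
        then have hM: "h \<in> hom D M M" using kh by (simp add: hom_def)
        have "G1 h \<in> hom C (Cod C (G1 k)) (Cod C (G1 k))" using fhom[OF G hM] dGk by simp
        then obtain a' where a': "a' \<in> hom C (G0 K) (G0 K)" "Cmp C (G1 h) (G1 k) = Cmp C (G1 k) a'"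
          using sf dGk unfolding fully_invariant_def by auto
        obtain a where a: "a \<in> hom D K K" "G1 a = a'" using ff_full[OF ff Kobj Kobj a'(1)] by blast
        have "G1 (Cmp D h k) = G1 (Cmp D k a)"
          using fcmp_hom[OF G kh hM] fcmp_hom[OF G a(1) kh] a a' by simp
        then have "Cmp D h k = Cmp D k a"
          using ff_faithful[OF ff Kobj M] cmp_hom[OF D kh hM] cmp_hom[OF D a(1) kh] by blast
        then show "\<exists>\<alpha>\<in>hom D (Dom D k) (Dom D k). Cmp D h k = Cmp D k \<alpha>" using a K_def by blast
      qed
    qed
  qed
next
  assume SD: "strongly_rickart D M N"
  show "strongly_rickart C (G0 M) (G0 N)" unfolding strongly_rickart_def
  proof (intro ballI allI impI)
    fix f' k' assume f': "f' \<in> hom C (G0 M) (G0 N)" and k': "is_kernel C f' k'"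
    obtain g where g: "g \<in> hom D M N" "G1 g = f'" using ff_full[OF ff M N f'] by blast
    obtain k where k: "is_kernel D g k" using kex g by (auto simp: hom_def)
    define K where "K = Dom D k"
    have kh: "k \<in> hom D K M" using kD_k[OF k] kD_cod[OF k] g by (simp add: hom_def K_def)
    have Kobj: "K \<in> Obj D" using dom_obj[OF D kD_k[OF k]] K_def by simp
    have sf: "is_section D k \<and> fully_invariant D k" using SD g k unfolding strongly_rickart_def by blast
    have Gk: "is_kernel C f' (G1 k)" using pres[OF k] g by simp
    have Gkh: "G1 k \<in> hom C (G0 K) (G0 M)" by (rule fhom[OF G kh])
    define K' where "K' = Dom C k'"
    have k'h: "k' \<in> hom C K' (G0 M)" using kD_k[OF k'] kD_cod[OF k'] f' by (simp add: hom_def K'_def)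
    have K'obj: "K' \<in> Obj C" using dom_obj[OF C kD_k[OF k']] K'_def by simp
    obtain phi where phi: "phi \<in> hom C K' (G0 K)" "Cmp C (G1 k) phi = k'"
      using kD_ex[OF Gk kD_k[OF k'] kD_cod[OF k'] kD_zero[OF k']] Gkh by (auto simp: hom_def K'_def)
    obtain psi where psi: "psi \<in> hom C (G0 K) K'" "Cmp C k' psi = G1 k"
      using kD_ex[OF k' kD_k[OF Gk] kD_cod[OF Gk] kD_zero[OF Gk]] Gkh by (auto simp: hom_def K'_def)
    have pp: "Cmp C psi phi = Idm C K'"
    proof (rule kD_un[OF k' kD_k[OF k'] kD_cod[OF k'] kD_zero[OF k']])
      show "Cmp C psi phi \<in> hom C (Dom C k') (Dom C k')" using cmp_hom[OF C phi(1) psi(1)] K'_def by simp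
      show "Idm C K' \<in> hom C (Dom C k') (Dom C k')" using id_hom[OF C K'obj] K'_def by simp
      show "Cmp C k' (Cmp C psi phi) = k'"
        using assoc_hom[OF C phi(1) psi(1) k'h] psi(2) phi(2) by simp
      show "Cmp C k' (Idm C K') = k'" by (rule id_r_hom[OF C k'h])
    qed
    show "is_section C k' \<and> fully_invariant C k'"
    proof
      obtain r where r: "r \<in> hom D M K" "Cmp D r k = Idm D K"
        using sf kh unfolding is_section_def by (auto simp: hom_def K_def)
      have Gr: "G1 r \<in> hom C (G0 M) (G0 K)" by (rule fhom[OF G r(1)])
      have GrGk: "Cmp C (G1 r) (G1 k) = Idm C (G0 K)"
        using fcmp_hom[OF G kh r(1)] r(2) fid[OF G Kobj] by simp
      have "Cmp C (Cmp C psi (G1 r)) k' = Cmp C psi (Cmp C (G1 r) k')"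
        using assoc_hom[OF C k'h Gr psi(1)] by simp
      also have "\<dots> = Cmp C psi (Cmp C (G1 r) (Cmp C (G1 k) phi))" using phi(2) by simp
      also have "\<dots> = Cmp C psi (Cmp C (Cmp C (G1 r) (G1 k)) phi)"
        using assoc_hom[OF C phi(1) Gkh Gr] by simp
      also have "\<dots> = Cmp C psi phi" using GrGk id_l_hom[OF C phi(1)] by simp
      finally have "Cmp C (Cmp C psi (G1 r)) k' = Idm C K'" using pp by simp
      moreover have "Cmp C psi (G1 r) \<in> hom C (Cod C k') (Dom C k')"
        using cmp_hom[OF C Gr psi(1)] k'h K'_def by (simp add: hom_def)
      ultimately show "is_section C k'" unfolding is_section_def using k'h K'_def
        by (auto simp: hom_def)
    next
      show "fully_invariant C k'" unfolding fully_invariant_def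
      proof (intro conjI ballI)
        show "mono C k'" by (rule kernel_mono[OF C k'])
        fix h assume h: "h \<in> hom C (Cod C k') (Cod C k')"
        then have hM: "h \<in> hom C (G0 M) (G0 M)" using k'h by (simp add: hom_def)
        obtain h0 where h0: "h0 \<in> hom D M M" "G1 h0 = h" using ff_full[OF ff M M hM] by blast
        obtain a where a: "a \<in> hom D K K" "Cmp D h0 k = Cmp D k a"
          using sf h0 kh unfolding fully_invariant_def by (auto simp: hom_def K_def)
        have Ga: "G1 a \<in> hom C (G0 K) (G0 K)" by (rule fhom[OF G a(1)])
        have "Cmp C h k' = Cmp C h (Cmp C (G1 k) phi)" using phi(2) by simp
        also have "\<dots> = Cmp C (Cmp C h (G1 k)) phi" using assoc_hom[OF C phi(1) Gkh hM] by simp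
        also have "\<dots> = Cmp C (G1 (Cmp D h0 k)) phi" using fcmp_hom[OF G kh h0(1)] h0(2) by simp
        also have "\<dots> = Cmp C (G1 (Cmp D k a)) phi" using a(2) by simp
        also have "\<dots> = Cmp C (Cmp C (G1 k) (G1 a)) phi" using fcmp_hom[OF G a(1) kh] by simp
        also have "\<dots> = Cmp C (Cmp C (Cmp C k' psi) (G1 a)) phi" using psi(2) by simp
        also have "\<dots> = Cmp C (Cmp C k' (Cmp C psi (G1 a))) phi" using assoc_hom[OF C Ga psi(1) k'h] by simp
        also have "\<dots> = Cmp C k' (Cmp C (Cmp C psi (G1 a)) phi)"
          using assoc_hom[OF C phi(1) cmp_hom[OF C Ga psi(1)] k'h] by simp
        finally have e: "Cmp C h k' = Cmp C k' (Cmp C (Cmp C psi (G1 a)) phi)" .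
        have "Cmp C (Cmp C psi (G1 a)) phi \<in> hom C (Dom C k') (Dom C k')"
          using cmp_hom[OF C phi(1) cmp_hom[OF C Ga psi(1)]] K'_def by simp
        then show "\<exists>\<alpha>\<in>hom C (Dom C k') (Dom C k'). Cmp C h k' = Cmp C k' \<alpha>" using e by blast
      qed
    qed
  qed
qed



lemma transfer_dual:
  assumes C: "category C" and D: "category D" and G: "is_functor D C G0 G1"
    and ff: "fully_faithful D C G0 G1"
    and cex: "\<And>f. f \<in> Arr D \<Longrightarrow> \<exists>c. is_cokernel D f c"
    and pres: "\<And>g c. is_cokernel D g c \<Longrightarrow> is_cokernel C (G1 g) (G1 c)"
    and M: "M \<in> Obj D" and N: "N \<in> Obj D"
  shows "dual_strongly_rickart D M N \<longleftrightarrow> dual_strongly_rickart C (G0 M) (G0 N)"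
  using transfer[OF op_category[OF C] op_category[OF D] op_functor[OF G] op_ff[OF ff], of N M]
    cex pres M N by (simp add: op_sr)

locale triple = a1: adj B A L0 L1 F0 F1 eta + a2: adj A B F0 F1 R0 R1 theta
  for A :: "('a,'b) cat" and B :: "('c,'d) cat" and L0 L1 F0 F1 R0 R1 eta theta
begin

lemma catA: "category A" by (rule a1.catD)
lemma catB: "category B" by (rule a1.catC)
lemma LF: "is_functor B A L0 L1" by (rule a1.LF)
lemma FF: "is_functor A B F0 F1" by (rule a1.GF)
lemma RF: "is_functor B A R0 R1" by (rule a2.GF)

lemma eps_ex: "\<exists>eps. \<forall>Y\<in>Obj B. eps Y \<in> hom B (F0 (R0 Y)) Y \<and> Cmp A (R1 (eps Y)) (theta (R0 Y)) = Idm A (R0 Y)"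
proof -
  have "\<forall>Y\<in>Obj B. \<exists>e. e \<in> hom B (F0 (R0 Y)) Y \<and> Cmp A (R1 e) (theta (R0 Y)) = Idm A (R0 Y)"
  proof
    fix Y assume Y: "Y \<in> Obj B"
    have RY: "R0 Y \<in> Obj A" by (rule fobj[OF RF Y])
    show "\<exists>e. e \<in> hom B (F0 (R0 Y)) Y \<and> Cmp A (R1 e) (theta (R0 Y)) = Idm A (R0 Y)"
      by (rule a2.univ_ex[OF RY Y id_hom[OF catA RY]])
  qed
  then show ?thesis by (rule bchoice)
qed

end

locale triple_eps = triple +
  fixes eps
  assumes eps: "\<forall>Y\<in>Obj B. eps Y \<in> hom B (F0 (R0 Y)) Y \<and> Cmp A (R1 (eps Y)) (theta (R0 Y)) = Idm A (R0 Y)"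
begin

lemma eps_hom: "Y \<in> Obj B \<Longrightarrow> eps Y \<in> hom B (F0 (R0 Y)) Y" using eps by blast
lemma eps_id: "Y \<in> Obj B \<Longrightarrow> Cmp A (R1 (eps Y)) (theta (R0 Y)) = Idm A (R0 Y)" using eps by blast

lemma counit_tr:
  assumes U: "U \<in> Obj A" and Y: "Y \<in> Obj B" and a: "a \<in> hom A U (R0 Y)"
  shows "Cmp A (R1 (Cmp B (eps Y) (F1 a))) (theta U) = a"
proof -
  have RY: "R0 Y \<in> Obj A" by (rule fobj[OF RF Y])
  have Fa: "F1 a \<in> hom B (F0 U) (F0 (R0 Y))" by (rule fhom[OF FF a])
  have RFa: "R1 (F1 a) \<in> hom A (R0 (F0 U)) (R0 (F0 (R0 Y)))" by (rule fhom[OF RF Fa])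
  have Re: "R1 (eps Y) \<in> hom A (R0 (F0 (R0 Y))) (R0 Y)" by (rule fhom[OF RF eps_hom[OF Y]])
  have tU: "theta U \<in> hom A U (R0 (F0 U))" by (rule a2.eta[OF U])
  have tR: "theta (R0 Y) \<in> hom A (R0 Y) (R0 (F0 (R0 Y)))" by (rule a2.eta[OF RY])
  have "Cmp A (R1 (Cmp B (eps Y) (F1 a))) (theta U) = Cmp A (Cmp A (R1 (eps Y)) (R1 (F1 a))) (theta U)"
    using fcmp_hom[OF RF Fa eps_hom[OF Y]] by simp
  also have "\<dots> = Cmp A (R1 (eps Y)) (Cmp A (R1 (F1 a)) (theta U))"
    using assoc_hom[OF catA tU RFa Re] by simp
  also have "\<dots> = Cmp A (R1 (eps Y)) (Cmp A (theta (R0 Y)) a)"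
    using a2.nat[of a] a by (simp add: hom_def)
  also have "\<dots> = Cmp A (Cmp A (R1 (eps Y)) (theta (R0 Y))) a"
    using assoc_hom[OF catA a tR Re] by simp
  also have "\<dots> = a" using eps_id[OF Y] id_l_hom[OF catA a] by simp
  finally show ?thesis .
qed

lemma counit_univ:
  assumes U: "U \<in> Obj A" and Y: "Y \<in> Obj B" and c: "c \<in> hom B (F0 U) Y"
  shows "Cmp B (eps Y) (F1 (Cmp A (R1 c) (theta U))) = c"
proof -
  have a: "Cmp A (R1 c) (theta U) \<in> hom A U (R0 Y)"
    using cmp_hom[OF catA a2.eta[OF U] fhom[OF RF c]] .
  have h: "Cmp B (eps Y) (F1 (Cmp A (R1 c) (theta U))) \<in> hom B (F0 U) Y"
    using cmp_hom[OF catB fhom[OF FF a] eps_hom[OF Y]] .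
  show ?thesis
    by (rule a2.univ_un[OF U Y h c]) (rule counit_tr[OF U Y a])
qed

definition etaiso where "etaiso \<longleftrightarrow> (\<forall>X\<in>Obj B. \<exists>r\<in>hom B (F0 (L0 X)) X.
   Cmp B r (eta X) = Idm B X \<and> Cmp B (eta X) r = Idm B (F0 (L0 X)))"

definition epsiso where "epsiso \<longleftrightarrow> (\<forall>Y\<in>Obj B. \<exists>s\<in>hom B Y (F0 (R0 Y)).
   Cmp B (eps Y) s = Idm B Y \<and> Cmp B s (eps Y) = Idm B (F0 (R0 Y)))"

lemma nat1: "h \<in> hom B X Y \<Longrightarrow> Cmp B (F1 (L1 h)) (eta X) = Cmp B (eta Y) h"
  using a1.nat[of h] by (simp add: hom_def)

lemma s1: assumes ff: "fully_faithful B A L0 L1" shows etaiso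
  unfolding etaiso_def
proof
  fix X assume X: "X \<in> Obj B"
  have LX: "L0 X \<in> Obj A" by (rule fobj[OF LF X])
  define P where "P = F0 (L0 X)"
  have P: "P \<in> Obj B" using fobj[OF FF LX] P_def by simp
  have eX: "eta X \<in> hom B X P" using a1.eta[OF X] P_def by simp
  obtain f0 where f0: "f0 \<in> hom A (L0 P) (L0 X)" "Cmp B (F1 f0) (eta P) = Idm B P"
    using a1.univ_ex[OF P LX] id_hom[OF catB P] P_def by auto
  obtain r where r: "r \<in> hom B P X" "L1 r = f0" using ff_full[OF ff P X f0(1)] by blast
  have er: "Cmp B (eta X) r = Idm B P"
    using nat1[OF r(1)] r(2) f0(2) by simp
  have inj: "a = b" if W: "W \<in> Obj B" and a: "a \<in> hom B W X" and b: "b \<in> hom B W X"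
    and eq: "Cmp B (eta X) a = Cmp B (eta X) b" for W a b
  proof -
    have "L1 a = L1 b"
      by (rule a1.univ_un[OF W LX fhom[OF LF a] fhom[OF LF b]]) (use nat1[OF a] nat1[OF b] eq in simp)
    then show ?thesis by (rule ff_faithful[OF ff W X a b])
  qed
  have "Cmp B (eta X) (Cmp B r (eta X)) = Cmp B (Cmp B (eta X) r) (eta X)"
    by (rule assoc_hom[OF catB eX r(1) eX])
  also have "\<dots> = eta X" using er id_l_hom[OF catB eX] by simp
  also have "\<dots> = Cmp B (eta X) (Idm B X)" using id_r_hom[OF catB eX] by simp
  finally have "Cmp B r (eta X) = Idm B X"
    by (rule inj[OF X cmp_hom[OF catB eX r(1)] id_hom[OF catB X]])
  then show "\<exists>r\<in>hom B (F0 (L0 X)) X. Cmp B r (eta X) = Idm B X \<and> Cmp B (eta X) r = Idm B (F0 (L0 X))"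
    using r er P_def by blast
qed

lemma s6: assumes E: etaiso shows "fully_faithful B A L0 L1"
  unfolding fully_faithful_def bij_betw_def
proof (intro ballI conjI)
  fix X Y assume X: "X \<in> Obj B" and Y: "Y \<in> Obj B"
  have LX: "L0 X \<in> Obj A" by (rule fobj[OF LF X])
  have LY: "L0 Y \<in> Obj A" by (rule fobj[OF LF Y])
  have eX: "eta X \<in> hom B X (F0 (L0 X))" by (rule a1.eta[OF X])
  have eY: "eta Y \<in> hom B Y (F0 (L0 Y))" by (rule a1.eta[OF Y])
  obtain r where r: "r \<in> hom B (F0 (L0 Y)) Y" "Cmp B r (eta Y) = Idm B Y" "Cmp B (eta Y) r = Idm B (F0 (L0 Y))"
    using E Y unfolding etaiso_def by blast
  show "inj_on L1 (hom B X Y)"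
  proof (rule inj_onI)
    fix a b assume a: "a \<in> hom B X Y" and b: "b \<in> hom B X Y" and eq: "L1 a = L1 b"
    have e: "Cmp B (eta Y) a = Cmp B (eta Y) b" using nat1[OF a] nat1[OF b] eq by simp
    have "a = Cmp B (Cmp B r (eta Y)) a" using r(2) id_l_hom[OF catB a] by simp
    also have "\<dots> = Cmp B r (Cmp B (eta Y) a)" using assoc_hom[OF catB a eY r(1)] by simp
    also have "\<dots> = Cmp B r (Cmp B (eta Y) b)" using e by simp
    also have "\<dots> = Cmp B (Cmp B r (eta Y)) b" using assoc_hom[OF catB b eY r(1)] by simp
    also have "\<dots> = b" using r(2) id_l_hom[OF catB b] by simp
    finally show "a = b" .
  qed
  show "L1 ` hom B X Y = hom A (L0 X) (L0 Y)"
  proof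
    show "L1 ` hom B X Y \<subseteq> hom A (L0 X) (L0 Y)" using fhom[OF LF] by blast
    show "hom A (L0 X) (L0 Y) \<subseteq> L1 ` hom B X Y"
    proof
      fix f assume f: "f \<in> hom A (L0 X) (L0 Y)"
      have Ff: "F1 f \<in> hom B (F0 (L0 X)) (F0 (L0 Y))" by (rule fhom[OF FF f])
      have Fe: "Cmp B (F1 f) (eta X) \<in> hom B X (F0 (L0 Y))" by (rule cmp_hom[OF catB eX Ff])
      define h where "h = Cmp B r (Cmp B (F1 f) (eta X))"
      have hh: "h \<in> hom B X Y" using cmp_hom[OF catB Fe r(1)] h_def by simp
      have "Cmp B (F1 (L1 h)) (eta X) = Cmp B (eta Y) h" by (rule nat1[OF hh])
      also have "\<dots> = Cmp B (Cmp B (eta Y) r) (Cmp B (F1 f) (eta X))"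
        using assoc_hom[OF catB Fe r(1) eY] h_def by simp
      also have "\<dots> = Cmp B (F1 f) (eta X)" using r(3) id_l_hom[OF catB Fe] by simp
      finally have "L1 h = f" by (rule a1.univ_un[OF X LY fhom[OF LF hh] f])
      then show "f \<in> L1 ` hom B X Y" using hh by blast
    qed
  qed
qed

lemma keyR:
  assumes X: "X \<in> Obj B" and u: "u \<in> hom B X Y"
  shows "Cmp A (R1 (Cmp B u (eps X))) (theta (R0 X)) = R1 u"
proof -
  have RX: "R0 X \<in> Obj A" by (rule fobj[OF RF X])
  have eX: "eps X \<in> hom B (F0 (R0 X)) X" by (rule eps_hom[OF X])
  have tX: "theta (R0 X) \<in> hom A (R0 X) (R0 (F0 (R0 X)))" by (rule a2.eta[OF RX])
  have "Cmp A (R1 (Cmp B u (eps X))) (theta (R0 X)) = Cmp A (Cmp A (R1 u) (R1 (eps X))) (theta (R0 X))"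
    using fcmp_hom[OF RF eX u] by simp
  also have "\<dots> = Cmp A (R1 u) (Cmp A (R1 (eps X)) (theta (R0 X)))"
    using assoc_hom[OF catA tX fhom[OF RF eX] fhom[OF RF u]] by simp
  also have "\<dots> = R1 u" using eps_id[OF X] id_r_hom[OF catA fhom[OF RF u]] by simp
  finally show ?thesis .
qed

lemma s3: assumes E: epsiso shows "fully_faithful B A R0 R1"
  unfolding fully_faithful_def bij_betw_def
proof (intro ballI conjI)
  fix X Y assume X: "X \<in> Obj B" and Y: "Y \<in> Obj B"
  have RX: "R0 X \<in> Obj A" by (rule fobj[OF RF X])
  have eX: "eps X \<in> hom B (F0 (R0 X)) X" by (rule eps_hom[OF X])
  obtain s where s: "s \<in> hom B X (F0 (R0 X))" "Cmp B (eps X) s = Idm B X" "Cmp B s (eps X) = Idm B (F0 (R0 X))"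
    using E X unfolding epsiso_def by blast
  show "inj_on R1 (hom B X Y)"
  proof (rule inj_onI)
    fix a b assume a: "a \<in> hom B X Y" and b: "b \<in> hom B X Y" and eq: "R1 a = R1 b"
    have e: "Cmp B a (eps X) = Cmp B b (eps X)"
      by (rule a2.univ_un[OF RX Y cmp_hom[OF catB eX a] cmp_hom[OF catB eX b]])
         (use keyR[OF X a] keyR[OF X b] eq in simp)
    have "a = Cmp B a (Cmp B (eps X) s)" using s(2) id_r_hom[OF catB a] by simp
    also have "\<dots> = Cmp B (Cmp B a (eps X)) s" using assoc_hom[OF catB s(1) eX a] by simp
    also have "\<dots> = Cmp B (Cmp B b (eps X)) s" using e by simp
    also have "\<dots> = Cmp B b (Cmp B (eps X) s)" using assoc_hom[OF catB s(1) eX b] by simp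
    also have "\<dots> = b" using s(2) id_r_hom[OF catB b] by simp
    finally show "a = b" .
  qed
  show "R1 ` hom B X Y = hom A (R0 X) (R0 Y)"
  proof
    show "R1 ` hom B X Y \<subseteq> hom A (R0 X) (R0 Y)" using fhom[OF RF] by blast
    show "hom A (R0 X) (R0 Y) \<subseteq> R1 ` hom B X Y"
    proof
      fix w assume w: "w \<in> hom A (R0 X) (R0 Y)"
      obtain c where c: "c \<in> hom B (F0 (R0 X)) Y" "Cmp A (R1 c) (theta (R0 X)) = w"
        using a2.univ_ex[OF RX Y w] by blast
      define u where "u = Cmp B c s"
      have uh: "u \<in> hom B X Y" using cmp_hom[OF catB s(1) c(1)] u_def by simp
      have "Cmp B u (eps X) = Cmp B c (Cmp B s (eps X))" using assoc_hom[OF catB eX s(1) c(1)] u_def by simp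
      also have "\<dots> = c" using s(3) id_r_hom[OF catB c(1)] by simp
      finally have "R1 u = w" using keyR[OF X uh] c(2) by simp
      then show "w \<in> R1 ` hom B X Y" using uh by blast
    qed
  qed
qed

end


context triple_eps begin

lemma s4: assumes ff: "fully_faithful B A R0 R1" shows epsiso
  unfolding epsiso_def
proof
  fix X assume X: "X \<in> Obj B"
  have RX: "R0 X \<in> Obj A" by (rule fobj[OF RF X])
  define P where "P = F0 (R0 X)"
  have P: "P \<in> Obj B" using fobj[OF FF RX] P_def by simp
  have eX: "eps X \<in> hom B P X" using eps_hom[OF X] P_def by simp
  have tX: "theta (R0 X) \<in> hom A (R0 X) (R0 P)" using a2.eta[OF RX] P_def by simp
  have inj: "a = b" if Y: "Y \<in> Obj B" and a: "a \<in> hom B X Y" and b: "b \<in> hom B X Y"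
    and eq: "Cmp B a (eps X) = Cmp B b (eps X)" for Y a b
  proof -
    have "R1 a = R1 b" using keyR[OF X a] keyR[OF X b] eq by simp
    then show ?thesis by (rule ff_faithful[OF ff X Y a b])
  qed
  obtain u where u: "u \<in> hom B X P" "R1 u = theta (R0 X)" using ff_full[OF ff X P tX] by blast
  have ue: "Cmp B u (eps X) = Idm B P"
  proof (rule a2.univ_un[OF RX P])
    show "Cmp B u (eps X) \<in> hom B (F0 (R0 X)) P" using cmp_hom[OF catB eX u(1)] P_def by simp
    show "Idm B P \<in> hom B (F0 (R0 X)) P" using id_hom[OF catB P] P_def by simp
    have "Cmp A (R1 (Idm B P)) (theta (R0 X)) = theta (R0 X)"
      using fid[OF RF P] id_l_hom[OF catA tX] by simp
    then show "Cmp A (R1 (Cmp B u (eps X))) (theta (R0 X)) = Cmp A (R1 (Idm B P)) (theta (R0 X))"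
      using keyR[OF X u(1)] u(2) by simp
  qed
  have "Cmp B (Cmp B (eps X) u) (eps X) = Cmp B (eps X) (Cmp B u (eps X))"
    using assoc_hom[OF catB eX u(1) eX] by simp
  also have "\<dots> = eps X" using ue id_r_hom[OF catB eX] by simp
  also have "\<dots> = Cmp B (Idm B X) (eps X)" using id_l_hom[OF catB eX] by simp
  finally have "Cmp B (eps X) u = Idm B X"
    by (rule inj[OF X cmp_hom[OF catB u(1) eX] id_hom[OF catB X]])
  then show "\<exists>s\<in>hom B X (F0 (R0 X)). Cmp B (eps X) s = Idm B X \<and> Cmp B s (eps X) = Idm B (F0 (R0 X))"
    using u ue P_def by blast
qed

lemma s2: assumes E: etaiso shows epsiso
  unfolding epsiso_def
proof
  fix Y assume Y: "Y \<in> Obj B"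
  have RY: "R0 Y \<in> Obj A" by (rule fobj[OF RF Y])
  have eY: "eps Y \<in> hom B (F0 (R0 Y)) Y" by (rule eps_hom[OF Y])
  have mono: "a = b" if W: "W \<in> Obj B" and a: "a \<in> hom B W (F0 (R0 Y))"
     and b: "b \<in> hom B W (F0 (R0 Y))" and eq: "Cmp B (eps Y) a = Cmp B (eps Y) b" for W a b
  proof -
    have LW: "L0 W \<in> Obj A" by (rule fobj[OF LF W])
    have eW: "eta W \<in> hom B W (F0 (L0 W))" by (rule a1.eta[OF W])
    obtain r where r: "r \<in> hom B (F0 (L0 W)) W" "Cmp B (eta W) r = Idm B (F0 (L0 W))"
      using E W unfolding etaiso_def by blast
    obtain a' where a': "a' \<in> hom A (L0 W) (R0 Y)" "Cmp B (F1 a') (eta W) = a"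
      using a1.univ_ex[OF W RY a] by blast
    obtain b' where b': "b' \<in> hom A (L0 W) (R0 Y)" "Cmp B (F1 b') (eta W) = b"
      using a1.univ_ex[OF W RY b] by blast
    have x: "Cmp B (eps Y) (F1 c') = Cmp B (Cmp B (eps Y) c) r"
      if c': "c' \<in> hom A (L0 W) (R0 Y)" "Cmp B (F1 c') (eta W) = c" for c' c
    proof -
      have Fc: "F1 c' \<in> hom B (F0 (L0 W)) (F0 (R0 Y))" by (rule fhom[OF FF c'(1)])
      have xa: "Cmp B (eps Y) (F1 c') \<in> hom B (F0 (L0 W)) Y" by (rule cmp_hom[OF catB Fc eY])
      have "Cmp B (eps Y) (F1 c') = Cmp B (Cmp B (eps Y) (F1 c')) (Cmp B (eta W) r)"
        using r(2) id_r_hom[OF catB xa] by simp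
      also have "\<dots> = Cmp B (Cmp B (Cmp B (eps Y) (F1 c')) (eta W)) r"
        using assoc_hom[OF catB r(1) eW xa] by simp
      also have "\<dots> = Cmp B (Cmp B (eps Y) (Cmp B (F1 c') (eta W))) r"
        using assoc_hom[OF catB eW Fc eY] by simp
      finally show ?thesis using c'(2) by simp
    qed
    have "Cmp B (eps Y) (F1 a') = Cmp B (eps Y) (F1 b')" using x[OF a'] x[OF b'] eq by simp
    then have "a' = b'" using counit_tr[OF LW Y a'(1)] counit_tr[OF LW Y b'(1)] by metis
    then show ?thesis using a' b' by simp
  qed
  have LY: "L0 Y \<in> Obj A" by (rule fobj[OF LF Y])
  have eYt: "eta Y \<in> hom B Y (F0 (L0 Y))" by (rule a1.eta[OF Y])
  obtain r where r: "r \<in> hom B (F0 (L0 Y)) Y" "Cmp B r (eta Y) = Idm B Y"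
    using E Y unfolding etaiso_def by blast
  define a' where "a' = Cmp A (R1 r) (theta (L0 Y))"
  have a'h: "a' \<in> hom A (L0 Y) (R0 Y)"
    using cmp_hom[OF catA a2.eta[OF LY] fhom[OF RF r(1)]] a'_def by simp
  have ea: "Cmp B (eps Y) (F1 a') = r" using counit_univ[OF LY Y r(1)] a'_def by simp
  define s where "s = Cmp B (F1 a') (eta Y)"
  have sh: "s \<in> hom B Y (F0 (R0 Y))" using cmp_hom[OF catB eYt fhom[OF FF a'h]] s_def by simp
  have es: "Cmp B (eps Y) s = Idm B Y"
    using assoc_hom[OF catB eYt fhom[OF FF a'h] eY] ea r(2) s_def by simp
  have "Cmp B (eps Y) (Cmp B s (eps Y)) = Cmp B (eps Y) (Idm B (F0 (R0 Y)))"
    using assoc_hom[OF catB eY sh eY] es id_l_hom[OF catB eY] id_r_hom[OF catB eY] by simp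
  then have "Cmp B s (eps Y) = Idm B (F0 (R0 Y))"
    using mono[OF fobj[OF FF RY] cmp_hom[OF catB eY sh] id_hom[OF catB fobj[OF FF RY]]] by simp
  then show "\<exists>s\<in>hom B Y (F0 (R0 Y)). Cmp B (eps Y) s = Idm B Y \<and> Cmp B s (eps Y) = Idm B (F0 (R0 Y))"
    using sh es by blast
qed

lemma s5: assumes E: epsiso shows etaiso
  unfolding etaiso_def
proof
  fix X assume X: "X \<in> Obj B"
  have LX: "L0 X \<in> Obj A" by (rule fobj[OF LF X])
  have RX: "R0 X \<in> Obj A" by (rule fobj[OF RF X])
  have eX: "eta X \<in> hom B X (F0 (L0 X))" by (rule a1.eta[OF X])
  have epi: "b1 = b2" if Y: "Y \<in> Obj B" and b1: "b1 \<in> hom B (F0 (L0 X)) Y"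
     and b2: "b2 \<in> hom B (F0 (L0 X)) Y" and eq: "Cmp B b1 (eta X) = Cmp B b2 (eta X)" for Y b1 b2
  proof -
    have RY: "R0 Y \<in> Obj A" by (rule fobj[OF RF Y])
    have eY: "eps Y \<in> hom B (F0 (R0 Y)) Y" by (rule eps_hom[OF Y])
    obtain s where s: "s \<in> hom B Y (F0 (R0 Y))" "Cmp B s (eps Y) = Idm B (F0 (R0 Y))"
      using E Y unfolding epsiso_def by blast
    define b1' where "b1' = Cmp A (R1 b1) (theta (L0 X))"
    define b2' where "b2' = Cmp A (R1 b2) (theta (L0 X))"
    have h1: "b1' \<in> hom A (L0 X) (R0 Y)" using cmp_hom[OF catA a2.eta[OF LX] fhom[OF RF b1]] b1'_def by simp
    have h2: "b2' \<in> hom A (L0 X) (R0 Y)" using cmp_hom[OF catA a2.eta[OF LX] fhom[OF RF b2]] b2'_def by simp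
    have c1: "Cmp B (eps Y) (F1 b1') = b1" using counit_univ[OF LX Y b1] b1'_def by simp
    have c2: "Cmp B (eps Y) (F1 b2') = b2" using counit_univ[OF LX Y b2] b2'_def by simp
    have y: "Cmp B (F1 c') (eta X) = Cmp B s (Cmp B c (eta X))"
      if c': "c' \<in> hom A (L0 X) (R0 Y)" "Cmp B (eps Y) (F1 c') = c" for c' c
    proof -
      have Fc: "F1 c' \<in> hom B (F0 (L0 X)) (F0 (R0 Y))" by (rule fhom[OF FF c'(1)])
      have yh: "Cmp B (F1 c') (eta X) \<in> hom B X (F0 (R0 Y))" by (rule cmp_hom[OF catB eX Fc])
      have "Cmp B (F1 c') (eta X) = Cmp B (Cmp B s (eps Y)) (Cmp B (F1 c') (eta X))"
        using s(2) id_l_hom[OF catB yh] by simp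
      also have "\<dots> = Cmp B s (Cmp B (eps Y) (Cmp B (F1 c') (eta X)))"
        using assoc_hom[OF catB yh eY s(1)] by simp
      also have "\<dots> = Cmp B s (Cmp B (Cmp B (eps Y) (F1 c')) (eta X))"
        using assoc_hom[OF catB eX Fc eY] by simp
      finally show ?thesis using c'(2) by simp
    qed
    have "Cmp B (F1 b1') (eta X) = Cmp B (F1 b2') (eta X)" using y[OF h1 c1] y[OF h2 c2] eq by simp
    then have "b1' = b2'" by (rule a1.univ_un[OF X RY h1 h2])
    then show ?thesis using c1 c2 by simp
  qed
  obtain s where s: "s \<in> hom B X (F0 (R0 X))" "Cmp B (eps X) s = Idm B X"
    using E X unfolding epsiso_def by blast
  obtain d' where d': "d' \<in> hom A (L0 X) (R0 X)" "Cmp B (F1 d') (eta X) = s"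
    using a1.univ_ex[OF X RX s(1)] by blast
  define r where "r = Cmp B (eps X) (F1 d')"
  have rh: "r \<in> hom B (F0 (L0 X)) X" using cmp_hom[OF catB fhom[OF FF d'(1)] eps_hom[OF X]] r_def by simp
  have re: "Cmp B r (eta X) = Idm B X"
    using assoc_hom[OF catB eX fhom[OF FF d'(1)] eps_hom[OF X]] d'(2) s(2) r_def by simp
  have FLX: "F0 (L0 X) \<in> Obj B" by (rule fobj[OF FF LX])
  have "Cmp B (Cmp B (eta X) r) (eta X) = Cmp B (Idm B (F0 (L0 X))) (eta X)"
    using assoc_hom[OF catB eX rh eX] re id_l_hom[OF catB eX] id_r_hom[OF catB eX] by simp
  then have "Cmp B (eta X) r = Idm B (F0 (L0 X))"
    using epi[OF FLX cmp_hom[OF catB rh eX] id_hom[OF catB FLX]] by simp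
  then show "\<exists>r\<in>hom B (F0 (L0 X)) X. Cmp B r (eta X) = Idm B X \<and> Cmp B (eta X) r = Idm B (F0 (L0 X))"
    using rh re by blast
qed

lemma ff_equiv: "fully_faithful B A L0 L1 \<longleftrightarrow> fully_faithful B A R0 R1"
  using s1 s2 s3 s4 s5 s6 by blast

end

lemma (in triple) ff_equiv': "fully_faithful B A L0 L1 \<longleftrightarrow> fully_faithful B A R0 R1"
proof -
  obtain eps where "\<forall>Y\<in>Obj B. eps Y \<in> hom B (F0 (R0 Y)) Y \<and> Cmp A (R1 (eps Y)) (theta (R0 Y)) = Idm A (R0 Y)"
    using eps_ex by blast
  then interpret triple_eps A B L0 L1 F0 F1 R0 R1 eta theta eps by unfold_locales
  show ?thesis by (rule ff_equiv)
qed



lemma abelianD: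
  assumes "abelian C"
  shows "category C" "\<exists>Z. zero_object C Z" "\<And>f. f \<in> Arr C \<Longrightarrow> \<exists>k. is_kernel C f k"
    "\<And>f. f \<in> Arr C \<Longrightarrow> \<exists>c. is_cokernel C f c"
  using assms unfolding abelian_def by blast+

theorem corollary4p3:
  fixes A :: "('a, 'b) cat" and B :: "('c, 'd) cat"
    and F0 :: "'a \<Rightarrow> 'c" and F1 :: "'b \<Rightarrow> 'd"
    and L0 :: "'c \<Rightarrow> 'a" and L1 :: "'d \<Rightarrow> 'b"
    and R0 :: "'c \<Rightarrow> 'a" and R1 :: "'d \<Rightarrow> 'b"
  assumes "abelian A" and "abelian B"
    and "adjunction B A L0 L1 F0 F1"
    and "adjunction A B F0 F1 R0 R1"
  shows "(fully_faithful A B F0 F1 \<longrightarrow>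
            (\<forall>M\<in>Obj A. \<forall>N\<in>Obj A.
               (strongly_rickart A M N \<longleftrightarrow> strongly_rickart B (F0 M) (F0 N)) \<and>
               (dual_strongly_rickart A M N \<longleftrightarrow> dual_strongly_rickart B (F0 M) (F0 N)))) \<and>
         (fully_faithful B A L0 L1 \<or> fully_faithful B A R0 R1 \<longrightarrow>
            (\<forall>M\<in>Obj B. \<forall>N\<in>Obj B.
               (strongly_rickart B M N \<longleftrightarrow> strongly_rickart A (R0 M) (R0 N)) \<and>
               (dual_strongly_rickart B M N \<longleftrightarrow> dual_strongly_rickart A (L0 M) (L0 N))))"
proof -
  note aA = abelianD[OF assms(1)] and aB = abelianD[OF assms(2)]
  obtain ZA where ZA: "zero_object A ZA" using aA(2) by blast
  obtain ZB where ZB: "zero_object B ZB" using aB(2) by blast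
  obtain eta where a1: "adj B A L0 L1 F0 F1 eta" using adjunction_adj[OF aB(1) aA(1) assms(3)] by blast
  obtain theta where a2: "adj A B F0 F1 R0 R1 theta" using adjunction_adj[OF aA(1) aB(1) assms(4)] by blast
  interpret triple A B L0 L1 F0 F1 R0 R1 eta theta using a1 a2 by (simp add: triple_def)
  have Fk: "\<And>g k. is_kernel A g k \<Longrightarrow> is_kernel B (F1 g) (F1 k)"
    using adj.G_kernel[OF a1 ZB ZA] by blast
  have Fc: "\<And>g c. is_cokernel A g c \<Longrightarrow> is_cokernel B (F1 g) (F1 c)"
    using adj.L_cokernel[OF a2 ZA ZB] by blast
  have Rk: "\<And>g k. is_kernel B g k \<Longrightarrow> is_kernel A (R1 g) (R1 k)"
    using adj.G_kernel[OF a2 ZA ZB] by blast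
  have Lc: "\<And>g c. is_cokernel B g c \<Longrightarrow> is_cokernel A (L1 g) (L1 c)"
    using adj.L_cokernel[OF a1 ZB ZA] by blast
  have P1: "(strongly_rickart A M N \<longleftrightarrow> strongly_rickart B (F0 M) (F0 N)) \<and>
      (dual_strongly_rickart A M N \<longleftrightarrow> dual_strongly_rickart B (F0 M) (F0 N))"
    if ff: "fully_faithful A B F0 F1" and M: "M \<in> Obj A" and N: "N \<in> Obj A" for M N
    using transfer[OF aB(1) aA(1) FF ff aA(3) Fk M N]
      transfer_dual[OF aB(1) aA(1) FF ff aA(4) Fc M N] by blast
  have P2: "(strongly_rickart B M N \<longleftrightarrow> strongly_rickart A (R0 M) (R0 N)) \<and>
      (dual_strongly_rickart B M N \<longleftrightarrow> dual_strongly_rickart A (L0 M) (L0 N))"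
    if ff: "fully_faithful B A L0 L1 \<or> fully_faithful B A R0 R1" and M: "M \<in> Obj B" and N: "N \<in> Obj B" for M N
  proof -
    have ffL: "fully_faithful B A L0 L1" and ffR: "fully_faithful B A R0 R1" using ff ff_equiv' by blast+
    show ?thesis
      using transfer[OF aA(1) aB(1) RF ffR aB(3) Rk M N]
        transfer_dual[OF aA(1) aB(1) LF ffL aB(4) Lc M N] by blast
  qed
  show ?thesis using P1 P2 by blast
qed


end
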